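(* Let $A=\sum_{\ell=0}^{2k}\sum_{|\underline{i}|=\ell}a_{\underline{i}}\,\overline{D}^{i_1}\otimes\cdots\otimes\overline{D}^{i_n}\in\mathfrak{D}^k_{\underline\lambda,\mu}$ and let $X_F\in\mathcal{K}(1)$, $F\in C^\infty_{\mathbb{C}}(S^{1|1})$. Then $\mathfrak{L}^{\underline\lambda,\mu}_{X_F}(A)=\sum_{\ell=0}^{2k}\sum_{|\underline{i}|=\ell}a^X_{\underline{i}}\,\overline{D}^{i_1}\otimes\cdots\otimes\overline{D}^{i_n}$, where, with $\delta=\mu-|\underline\lambda|$, $$a^X_{\underline{i}}=\mathfrak{L}^{\delta-\frac{|\underline{i}|}{2}}_{X_F}(a_{\underline{i}})-\sum_{r=1}^{2k-|\underline{i}|}(-1)^{r(|F|+|a_{\underline{i}+r\mathbf{1}_1}|)}\Big[\left(r+i_1\atop r+2\right)_s-\tfrac12(-1)^{i_1}\left(r+i_1\atop r+1\right)_s+\lambda_1\left(r+i_1\atop r\right)_s\Big]\overline{D}^r(F')\,a_{\underline{i}+r\mathbf{1}_1}$$ $$-\sum_{t=2}^n\sum_{r=1}^{2k-|\underline{i}|}(-1)^{r(|F|+|a_{\underline{i}+r\mathbf{1}_t}|+i_1+\dots+i_{t-1})}\Big[\left(r+i_t\atop r+2\right)_s-\tfrac12(-1)^{i_t}\left(r+i_t\atop r+1\right)_s+\lambda_t\left(r+i_t\atop r\right)_s\Big]\overline{D}^r(F')\,a_{\underline{i}+r\mathbf{1}_t}.$$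
   Context: The supercircle $S^{1|1}$ has function algebra $C^\infty_{\mathbb{C}}(S^{1|1})$ of elements $F=f_0(x)+\theta f_1(x)$ ($x$ even, $\theta$ odd, $\theta^2=0$); $F'=f_0'+\theta f_1'$, $|F|$ is the parity. $D=\partial_\theta+\theta\partial_x$, $\overline{D}=\partial_\theta-\theta\partial_x$, $\alpha=dx+\theta d\theta$. Contact vector fields: $X_f=-f\overline{D}^2+\frac12 D(f)\overline{D}$; they form $\mathcal{K}(1)$. $\mathfrak{F}_\lambda=\{G\alpha^\lambda\}$ with action $\mathfrak{L}^\lambda_{X_F}(G\alpha^\lambda)=(X_F(G)+\lambda F'G)\alpha^\lambda$ (the same formula $\mathfrak{L}^\lambda_{X_F}(G)=X_F(G)+\lambda F'G$ is applied to functions). On $\mathfrak{F}_{\lambda_1}\otimes\cdots\otimes\mathfrak{F}_{\lambda_n}$: $\mathfrak{L}^{\underline\lambda}_{X_F}(\Phi_1\otimes\cdots\otimes\Phi_n)=\sum_{p=1}^n(-1)^{|F|(|\Phi_1|+\dots+|\Phi_{p-1}|)}\Phi_1\otimes\cdots\otimes\mathfrak{L}^{\lambda_p}_{X_F}(\Phi_p)\otimes\cdots\otimes\Phi_n$. $\mathfrak{D}^k_{\underline\lambda,\mu}$ ($k\in\frac12\mathbb{N}$) is the space of operators $A=\sum_{|\underline{i}|\le 2k}a_{\underline{i}}\overline{D}^{i_1}\otimes\cdots\otimes\overline{D}^{i_n}$, $a_{\underline{i}}\in C^\infty_{\mathbb{C}}(S^{1|1})$, from $\mathfrak{F}_{\lambda_1}\otimes\cdots\otimes\mathfrak{F}_{\lambda_n}$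 to $\mathfrak{F}_\mu$, acting by $A(f_1\alpha^{\lambda_1}\otimes\cdots\otimes f_n\alpha^{\lambda_n})=\big(\sum_{\underline{i}}a_{\underline{i}}(-1)^{\sum_{p=1}^{n-1}|f_p|\sum_{s=p+1}^n i_s}\overline{D}^{i_1}(f_1)\cdots\overline{D}^{i_n}(f_n)\big)\alpha^\mu$, where $|\underline{i}|=i_1+\dots+i_n$, and $|\underline\lambda|=\lambda_1+\dots+\lambda_n$. The action is $\mathfrak{L}^{\underline\lambda,\mu}_{X_F}(A)=\mathfrak{L}^\mu_{X_F}\circ A-(-1)^{|A||F|}A\circ\mathfrak{L}^{\underline\lambda}_{X_F}$. $\mathbf{1}_t$ is the multi-index with $1$ in position $t$, $0$ elsewhere. Super binomial: $\left(j\atop i\right)_s=\left([j/2]\atop[i/2]\right)$ if $i$ is even or $j$ is odd, and $0$ otherwise, $[x]$ being the integer part. *)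

theory Defs
  imports "HOL-Analysis.Analysis" "HOL-Library.Function_Algebras"
begin

text \<open>An element F = f0(x) + theta f1(x) is represented as the pair (f0, f1) of
  complex-valued functions of the even variable x (2 pi-periodic, smooth).\<close>

type_synonym sfun = "(real \<Rightarrow> complex) \<times> (real \<Rightarrow> complex)"

definition vd :: "(real \<Rightarrow> complex) \<Rightarrow> (real \<Rightarrow> complex)" where
  "vd f = (\<lambda>x. vector_derivative f (at x))"

definition smooth_S1 :: "(real \<Rightarrow> complex) \<Rightarrow> bool" where
  "smooth_S1 f \<longleftrightarrow> (\<forall>m x. ((vd ^^ m) f) differentiable (at x)) \<and> (\<forall>x. f (x + 2 * pi) = f x)"

definition smooth_sf :: "sfun \<Rightarrow> bool" where
  "smooth_sf F \<longleftrightarrow> smooth_S1 (fst F) \<and> smooth_S1 (snd F)"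

text \<open>Homogeneous elements: parity 0 means F = f0 (even), parity 1 means F = theta f1 (odd).\<close>
definition has_parity :: "sfun \<Rightarrow> nat \<Rightarrow> bool" where
  "has_parity F p \<longleftrightarrow> (p = 0 \<and> snd F = (\<lambda>_. 0)) \<or> (p = 1 \<and> fst F = (\<lambda>_. 0))"

definition sone :: sfun where "sone = ((\<lambda>_. 1), (\<lambda>_. 0))"

text \<open>(f0 + theta f1)(g0 + theta g1) = f0 g0 + theta (f1 g0 + f0 g1), since theta^2 = 0.\<close>
definition smul :: "sfun \<Rightarrow> sfun \<Rightarrow> sfun" where
  "smul F G = ((\<lambda>x. fst F x * fst G x), (\<lambda>x. snd F x * fst G x + fst F x * snd G x))"

definition sscale :: "complex \<Rightarrow> sfun \<Rightarrow> sfun" where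
  "sscale c F = ((\<lambda>x. c * fst F x), (\<lambda>x. c * snd F x))"

definition sder :: "sfun \<Rightarrow> sfun" where
  "sder F = (vd (fst F), vd (snd F))"

text \<open>D = d/dtheta + theta d/dx ,  Dbar = d/dtheta - theta d/dx\<close>
definition sD :: "sfun \<Rightarrow> sfun" where
  "sD F = (snd F, vd (fst F))"

definition sDbar :: "sfun \<Rightarrow> sfun" where
  "sDbar F = (snd F, (\<lambda>x. - vd (fst F) x))"

definition Xact :: "sfun \<Rightarrow> sfun \<Rightarrow> sfun" where
  "Xact F G = - smul F (sDbar (sDbar G)) + sscale (1/2) (smul (sD F) (sDbar G))"

definition Lie :: "complex \<Rightarrow> sfun \<Rightarrow> sfun \<Rightarrow> sfun" where
  "Lie lam F G = Xact F G + sscale lam (smul (sder F) G)"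

text \<open>Multi-indices (i_1,...,i_n) are functions nat => nat vanishing outside {1..n};
  idx n l is the set of those with |i| = l.\<close>
definition idx :: "nat \<Rightarrow> nat \<Rightarrow> (nat \<Rightarrow> nat) set" where
  "idx n l = {i. (\<forall>p. (p < 1 \<or> n < p) \<longrightarrow> i p = 0) \<and> (\<Sum>p\<in>{1..n}. i p) = l}"

definition msize :: "nat \<Rightarrow> (nat \<Rightarrow> nat) \<Rightarrow> nat" where
  "msize n i = (\<Sum>p\<in>{1..n}. i p)"

definition sprod :: "nat \<Rightarrow> (nat \<Rightarrow> sfun) \<Rightarrow> sfun" where
  "sprod n g = foldr (\<lambda>p acc. smul (g p) acc) [1..<n+1] sone"

text \<open>Application of A = sum_{|i| <= K} a_i Dbar^{i_1} x ... x Dbar^{i_n} (K = 2k) to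
  homogeneous f_1,...,f_n with parities q_1,...,q_n.\<close>
definition opapp :: "nat \<Rightarrow> nat \<Rightarrow> ((nat \<Rightarrow> nat) \<Rightarrow> sfun) \<Rightarrow> (nat \<Rightarrow> nat) \<Rightarrow> (nat \<Rightarrow> sfun) \<Rightarrow> sfun" where
  "opapp n K a q f =
     (\<Sum>l\<in>{0..K}. \<Sum>i\<in>idx n l.
        sscale ((-1) ^ (\<Sum>p\<in>{1..n-1}. q p * (\<Sum>s\<in>{p+1..n}. i s)))
          (smul (a i) (sprod n (\<lambda>p. (sDbar ^^ i p) (f p)))))"

text \<open>The action L^{lambda,mu}_{X_F}(A) = L^mu_{X_F} o A - (-1)^{|A||F|} A o L^lambda_{X_F},
  evaluated on f_1 x ... x f_n.\<close>
definition opLie :: "nat \<Rightarrow> nat \<Rightarrow> (nat \<Rightarrow> complex) \<Rightarrow> complex \<Rightarrow> ((nat \<Rightarrow> nat) \<Rightarrow> sfun) \<Rightarrow> nat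
     \<Rightarrow> sfun \<Rightarrow> nat \<Rightarrow> (nat \<Rightarrow> nat) \<Rightarrow> (nat \<Rightarrow> sfun) \<Rightarrow> sfun" where
  "opLie n K lam mu a pA F pF q f =
     Lie mu F (opapp n K a q f)
     - sscale ((-1) ^ (pA * pF))
         (\<Sum>p\<in>{1..n}. sscale ((-1) ^ (pF * (\<Sum>s\<in>{1..<p}. q s)))
            (opapp n K a (q(p := q p + pF)) (f(p := Lie (lam p) F (f p)))))"

definition sbinom :: "nat \<Rightarrow> nat \<Rightarrow> nat" where
  "sbinom j i = (if even i \<or> odd j then (j div 2) choose (i div 2) else 0)"

definition bcoef :: "nat \<Rightarrow> nat \<Rightarrow> complex \<Rightarrow> complex" where
  "bcoef r i lam = of_nat (sbinom (r + i) (r + 2)) - (1/2) * (-1) ^ i * of_nat (sbinom (r + i) (r + 1))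
                   + lam * of_nat (sbinom (r + i) r)"

definition coefX :: "nat \<Rightarrow> nat \<Rightarrow> (nat \<Rightarrow> complex) \<Rightarrow> complex \<Rightarrow> ((nat \<Rightarrow> nat) \<Rightarrow> sfun)
     \<Rightarrow> ((nat \<Rightarrow> nat) \<Rightarrow> nat) \<Rightarrow> sfun \<Rightarrow> nat \<Rightarrow> (nat \<Rightarrow> nat) \<Rightarrow> sfun" where
  "coefX n K lam mu a pa F pF i =
     (let \<delta> = mu - (\<Sum>p\<in>{1..n}. lam p) in
      Lie (\<delta> - of_nat (msize n i) / 2) F (a i)
      - (\<Sum>r\<in>{1..K - msize n i}.
           sscale ((-1) ^ (r * (pF + pa (i(1 := i 1 + r)))) * bcoef r (i 1) (lam 1))
             (smul ((sDbar ^^ r) (sder F)) (a (i(1 := i 1 + r)))))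
      - (\<Sum>t\<in>{2..n}. \<Sum>r\<in>{1..K - msize n i}.
           sscale ((-1) ^ (r * (pF + pa (i(t := i t + r)) + (\<Sum>s\<in>{1..t-1}. i s))) * bcoef r (i t) (lam t))
             (smul ((sDbar ^^ r) (sder F)) (a (i(t := i t + r))))))"

end

theory Submission
  imports Defs
begin


definition Dm :: "nat \<Rightarrow> (real \<Rightarrow> complex) \<Rightarrow> bool" where
  "Dm m u \<longleftrightarrow> (\<forall>k\<le>m. \<forall>x. (vd ^^ k) u differentiable (at x))"

definition Cs :: "(real \<Rightarrow> complex) \<Rightarrow> bool" where
  "Cs f \<longleftrightarrow> (\<forall>m x. (vd ^^ m) f differentiable (at x))"

lemma Dm_0: "Dm 0 u \<longleftrightarrow> (\<forall>x. u differentiable (at x))"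
  by (simp add: Dm_def)

lemma Dm_Suc: "Dm (Suc m) u \<longleftrightarrow> (\<forall>x. u differentiable (at x)) \<and> Dm m (vd u)"
proof -
  have "Dm (Suc m) u \<longleftrightarrow> (\<forall>k\<le>Suc m. \<forall>x. (vd ^^ k) u differentiable (at x))" by (simp add: Dm_def)
  also have "\<dots> \<longleftrightarrow> (\<forall>x. u differentiable (at x)) \<and> (\<forall>k\<le>m. \<forall>x. (vd ^^ Suc k) u differentiable (at x))"
    apply (auto simp del: funpow.simps)
    apply (case_tac k)
     apply (auto simp del: funpow.simps)
    done
  also have "\<dots> \<longleftrightarrow> (\<forall>x. u differentiable (at x)) \<and> Dm m (vd u)"
    by (simp add: Dm_def funpow_Suc_right del: funpow.simps)
  finally show ?thesis .
qed

lemma Cs_Dm: "Cs f \<longleftrightarrow> (\<forall>m. Dm m f)"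
  by (auto simp: Cs_def Dm_def)

lemma vd_add: "(\<forall>x. u differentiable (at x)) \<Longrightarrow> (\<forall>x. v differentiable (at x)) \<Longrightarrow>
   vd (\<lambda>x. u x + v x) = (\<lambda>x. vd u x + vd v x)"
  by (simp add: vd_def vector_derivative_add_at fun_eq_iff)

lemma vd_mult: "(\<forall>x. u differentiable (at x)) \<Longrightarrow> (\<forall>x. v differentiable (at x)) \<Longrightarrow>
   vd (\<lambda>x. u x * v x) = (\<lambda>x. vd u x * v x + u x * vd v x)"
  by (simp add: vd_def vector_derivative_mult_at fun_eq_iff algebra_simps)

lemma vd_const: "vd (\<lambda>x. c) = (\<lambda>x. 0)"
  by (simp add: vd_def fun_eq_iff vector_derivative_const_at)

lemma vd_cmult: "(\<forall>x. u differentiable (at x)) \<Longrightarrow> vd (\<lambda>x. c * u x) = (\<lambda>x. c * vd u x)"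
  using vd_mult[of "\<lambda>x. c" u] by (simp add: vd_const)

lemma Dm_add: "Dm m u \<Longrightarrow> Dm m v \<Longrightarrow> Dm m (\<lambda>x. u x + v x)"
proof (induction m arbitrary: u v)
  case 0 then show ?case by (simp add: Dm_0)
next
  case (Suc m)
  then show ?case by (simp add: Dm_Suc vd_add)
qed

lemma Dm_mono: "Dm m u \<Longrightarrow> k \<le> m \<Longrightarrow> Dm k u"
  by (auto simp: Dm_def)

lemma Dm_const: "Dm m (\<lambda>x. c)"
  by (induction m arbitrary: c) (auto simp: Dm_Suc Dm_0 vd_const)

lemma Dm_mult: "Cs u \<Longrightarrow> Cs v \<Longrightarrow> Dm m (\<lambda>x. u x * v x)"
proof (induction m arbitrary: u v)
  case 0 then show ?case by (auto simp add: Dm_0 Cs_Dm intro!: differentiable_mult dest!: spec[where x=0])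
next
  case (Suc m)
  have du: "\<forall>x. u differentiable (at x)" and dv: "\<forall>x. v differentiable (at x)"
    using Suc.prems by (auto simp: Cs_Dm Dm_0 dest: spec[where x=0])
  have cu: "Cs (vd u)" and cv: "Cs (vd v)" using Suc.prems by (auto simp: Cs_Dm Dm_Suc dest: spec[where x="Suc _"])
  show ?case
    using du dv Suc.IH[OF cu Suc.prems(2)] Suc.IH[OF Suc.prems(1) cv]
    by (simp add: Dm_Suc vd_mult Dm_add)
qed

lemma Cs_mult: "Cs u \<Longrightarrow> Cs v \<Longrightarrow> Cs (\<lambda>x. u x * v x)"
  using Dm_mult Cs_Dm by blast
lemma Cs_add: "Cs u \<Longrightarrow> Cs v \<Longrightarrow> Cs (\<lambda>x. u x + v x)"
  using Dm_add Cs_Dm by blast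
lemma Cs_const: "Cs (\<lambda>x. c)"
  using Dm_const Cs_Dm by blast
lemma Cs_cmult: "Cs u \<Longrightarrow> Cs (\<lambda>x. c * u x)"
  using Cs_mult[OF Cs_const] by blast
lemma Cs_vd: "Cs u \<Longrightarrow> Cs (vd u)"
  by (auto simp: Cs_Dm Dm_Suc dest: spec[where x="Suc _"])
lemma Cs_diff: "Cs u \<Longrightarrow> \<forall>x. u differentiable (at x)"
  by (auto simp: Cs_Dm Dm_0 dest: spec[where x=0])
lemma Cs_uminus: "Cs u \<Longrightarrow> Cs (\<lambda>x. - u x)"
  using Cs_cmult[of u "-1"] by simp
lemma Cs_minus: "Cs u \<Longrightarrow> Cs v \<Longrightarrow> Cs (\<lambda>x. u x - v x)"
  using Cs_add[of u "\<lambda>x. - v x"] Cs_uminus by simp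

lemma vd_add': "Cs u \<Longrightarrow> Cs v \<Longrightarrow> vd (\<lambda>x. u x + v x) = (\<lambda>x. vd u x + vd v x)"
  by (simp add: vd_add Cs_diff)
lemma vd_mult': "Cs u \<Longrightarrow> Cs v \<Longrightarrow> vd (\<lambda>x. u x * v x) = (\<lambda>x. vd u x * v x + u x * vd v x)"
  by (simp add: vd_mult Cs_diff)
lemma vd_cmult': "Cs u \<Longrightarrow> vd (\<lambda>x. c * u x) = (\<lambda>x. c * vd u x)"
  by (simp add: vd_cmult Cs_diff)
lemma vd_uminus': "Cs u \<Longrightarrow> vd (\<lambda>x. - u x) = (\<lambda>x. - vd u x)"
  using vd_cmult'[of u "-1"] by simp
lemma vd_minus': "Cs u \<Longrightarrow> Cs v \<Longrightarrow> vd (\<lambda>x. u x - v x) = (\<lambda>x. vd u x - vd v x)"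
  using vd_add'[of u "\<lambda>x. - v x"] vd_uminus' Cs_uminus by simp

lemma Cs_divc: assumes "Cs u" shows "Cs (\<lambda>x. u x / c)"
proof -
  have "(\<lambda>x. u x / c) = (\<lambda>x. inverse c * u x)" by (simp add: fun_eq_iff divide_inverse mult.commute)
  then show ?thesis using Cs_cmult[of u "inverse c"] assms by simp
qed
lemma vd_divc': assumes "Cs u" shows "vd (\<lambda>x. u x / c) = (\<lambda>x. vd u x / c)"
proof -
  have "(\<lambda>x. u x / c) = (\<lambda>x. inverse c * u x)" by (simp add: fun_eq_iff divide_inverse mult.commute)
  then show ?thesis using vd_cmult'[of u "inverse c"] assms by (simp add: fun_eq_iff divide_inverse mult.commute)
qed
lemmas Cs_rules = Cs_divc Cs_mult Cs_add Cs_const Cs_cmult Cs_vd Cs_uminus Cs_minus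
lemmas vd_rules = vd_divc' vd_add' vd_mult' vd_cmult' vd_uminus' vd_minus' vd_const


section \<open>sfun algebra\<close>

definition sm :: "sfun \<Rightarrow> bool" where
  "sm G \<longleftrightarrow> Cs (fst G) \<and> Cs (snd G)"

definition hp :: "sfun \<Rightarrow> nat \<Rightarrow> bool" where
  "hp G k \<longleftrightarrow> has_parity G (k mod 2)"

lemma smooth_sm: "smooth_sf G \<Longrightarrow> sm G"
  by (auto simp: smooth_sf_def smooth_S1_def sm_def Cs_def)

lemma fun_ops:
  "(f::real\<Rightarrow>complex) + g = (\<lambda>x. f x + g x)"
  "(f::real\<Rightarrow>complex) - g = (\<lambda>x. f x - g x)"
  "- (f::real\<Rightarrow>complex) = (\<lambda>x. - f x)"
  "(0::real\<Rightarrow>complex) = (\<lambda>x. 0)"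
  by (auto simp: fun_eq_iff)

lemmas sdefs = smul_def sscale_def sDbar_def sD_def sder_def Xact_def Lie_def sone_def

lemma sm_smul: "sm G \<Longrightarrow> sm H \<Longrightarrow> sm (smul G H)"
  unfolding sm_def smul_def by (simp add: Cs_mult Cs_add)
lemma sm_sscale: "sm G \<Longrightarrow> sm (sscale c G)"
  unfolding sm_def sscale_def by (simp add: Cs_cmult)
lemma sm_sDbar: "sm G \<Longrightarrow> sm (sDbar G)"
  unfolding sm_def sDbar_def by (simp add: Cs_vd Cs_uminus)
lemma sm_sD: "sm G \<Longrightarrow> sm (sD G)"
  unfolding sm_def sD_def by (simp add: Cs_vd)
lemma sm_sder: "sm G \<Longrightarrow> sm (sder G)"
  unfolding sm_def sder_def by (simp add: Cs_vd)
lemma sm_add: "sm G \<Longrightarrow> sm H \<Longrightarrow> sm (G + H)"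
  unfolding sm_def by (simp add: fun_ops Cs_add)
lemma sm_diff: "sm G \<Longrightarrow> sm H \<Longrightarrow> sm (G - H)"
  unfolding sm_def by (simp add: fun_ops Cs_minus)
lemma sm_uminus: "sm G \<Longrightarrow> sm (- G)"
  unfolding sm_def by (simp add: fun_ops Cs_uminus)
lemma sm_zero: "sm 0"
  unfolding sm_def by (simp add: zero_prod_def fun_ops Cs_const)
lemma sm_sone: "sm sone"
  unfolding sm_def sone_def by (simp add: Cs_const)
lemmas sm_simps = sm_smul sm_sscale sm_sDbar sm_sD sm_sder sm_add sm_diff sm_uminus sm_zero sm_sone

lemma sm_Xact: "sm F \<Longrightarrow> sm G \<Longrightarrow> sm (Xact F G)"
  by (simp add: Xact_def sm_simps)
lemma sm_Lie: "sm F \<Longrightarrow> sm G \<Longrightarrow> sm (Lie c F G)"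
  by (simp add: Lie_def sm_simps sm_Xact)
lemma sm_Dbarn: "sm G \<Longrightarrow> sm ((sDbar ^^ m) G)"
  by (induction m) (auto simp: sm_simps)
lemma sm_sum: "(\<And>x. x \<in> A \<Longrightarrow> sm (g x)) \<Longrightarrow> sm (\<Sum>x\<in>A. g x)"
  by (induction A rule: infinite_finite_induct) (auto simp: sm_simps)

lemma hp_iff: "hp G a \<longleftrightarrow> (even a \<and> (\<forall>x. snd G x = 0)) \<or> (odd a \<and> (\<forall>x. fst G x = 0))"
  by (auto simp: hp_def has_parity_def fun_eq_iff odd_iff_mod_2_eq_one even_iff_mod_2_eq_zero)

lemma hp_cases: "hp G a \<longleftrightarrow> (\<exists>g. G = (g, \<lambda>_. 0) \<and> even a) \<or> (\<exists>g. G = (\<lambda>_. 0, g) \<and> odd a)"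
  by (cases G) (auto simp: hp_iff fun_eq_iff)

lemma hp_smul: "hp G a \<Longrightarrow> hp H b \<Longrightarrow> hp (smul G H) (a + b)"
  by (auto simp: hp_iff smul_def)
lemma hp_simps:
  "hp G a \<Longrightarrow> hp (sscale c G) a"
  "hp G a \<Longrightarrow> hp (sDbar G) (Suc a)"
  "hp G a \<Longrightarrow> hp (sD G) (Suc a)"
  "hp G a \<Longrightarrow> hp (sder G) a"
  "hp G a \<Longrightarrow> hp H a \<Longrightarrow> hp (G + H) a"
  "hp G a \<Longrightarrow> hp H a \<Longrightarrow> hp (G - H) a"
  "hp G a \<Longrightarrow> hp (- G) a"
  "hp sone 0"
  by (auto simp: hp_cases sdefs vd_const fun_ops)
lemma hp_zero: "hp 0 a" by (simp add: hp_iff)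
lemma hp_mod: "hp G (a mod 2) \<longleftrightarrow> hp G a" by (simp add: hp_def)
lemma hp_odd_zero: "hp G a \<Longrightarrow> hp H b \<Longrightarrow> odd a \<Longrightarrow> odd b \<Longrightarrow> smul G H = 0"
  by (auto simp: hp_cases smul_def fun_ops zero_prod_def)

lemma smul_comm: "smul G H = smul H G"
  by (simp add: smul_def algebra_simps)
lemma smul_assoc: "smul (smul G H) K = smul G (smul H K)"
  by (simp add: smul_def algebra_simps)
lemma smul_one[simp]: "smul sone G = G" "smul G sone = G"
  by (simp_all add: smul_def sone_def)
lemma smul_zero[simp]: "smul 0 G = 0" "smul G 0 = 0"
  by (simp_all add: smul_def zero_prod_def fun_ops)
lemma smul_add: "smul (G + H) K = smul G K + smul H K" "smul K (G + H) = smul K G + smul K H"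
  by (simp_all add: smul_def fun_ops algebra_simps)
lemma smul_diff: "smul (G - H) K = smul G K - smul H K" "smul K (G - H) = smul K G - smul K H"
  by (simp_all add: smul_def fun_ops algebra_simps)
lemma smul_uminus: "smul (- G) K = - smul G K" "smul K (- G) = - smul K G"
  by (simp_all add: smul_def fun_ops algebra_simps)
lemma smul_sscale: "smul (sscale c G) H = sscale c (smul G H)" "smul H (sscale c G) = sscale c (smul H G)"
  by (simp_all add: smul_def sscale_def algebra_simps)
lemma sscale_sscale[simp]: "sscale a (sscale b G) = sscale (a * b) G"
  by (simp add: sscale_def mult.assoc)
lemma sscale_one[simp]: "sscale 1 G = G"
  by (simp add: sscale_def)
lemma sscale_zero[simp]: "sscale 0 G = 0" "sscale c 0 = 0"
  by (simp_all add: sscale_def zero_prod_def fun_ops)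
lemma sscale_add: "sscale c (G + H) = sscale c G + sscale c H" "sscale (a + b) G = sscale a G + sscale b G"
  by (simp_all add: sscale_def fun_ops algebra_simps)
lemma sscale_diff: "sscale c (G - H) = sscale c G - sscale c H" "sscale (a - b) G = sscale a G - sscale b G"
  by (simp_all add: sscale_def fun_ops algebra_simps)
lemma sscale_uminus: "sscale c (- G) = - sscale c G" "sscale (- a) G = - sscale a G"
  by (simp_all add: sscale_def fun_ops algebra_simps)
lemma sscale_sum: "sscale c (\<Sum>x\<in>A. g x) = (\<Sum>x\<in>A. sscale c (g x))"
  by (induction A rule: infinite_finite_induct) (simp_all add: sscale_add)
lemma sscale_sum_left: "sscale (\<Sum>x\<in>A. g x) G = (\<Sum>x\<in>A. sscale (g x) G)"
  by (induction A rule: infinite_finite_induct) (simp_all add: sscale_add)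
lemma smul_sum: "smul (\<Sum>x\<in>A. g x) H = (\<Sum>x\<in>A. smul (g x) H)"
  "smul H (\<Sum>x\<in>A. g x) = (\<Sum>x\<in>A. smul H (g x))"
  by (induction A rule: infinite_finite_induct) (simp_all add: smul_add)

lemma sDbar_add: "sm G \<Longrightarrow> sm H \<Longrightarrow> sDbar (G + H) = sDbar G + sDbar H"
  by (auto simp: sm_def sDbar_def fun_ops vd_rules)
lemma sDbar_diff: "sm G \<Longrightarrow> sm H \<Longrightarrow> sDbar (G - H) = sDbar G - sDbar H"
  by (auto simp: sm_def sDbar_def fun_ops vd_rules)
lemma sDbar_sscale: "sm G \<Longrightarrow> sDbar (sscale c G) = sscale c (sDbar G)"
  by (auto simp: sm_def sDbar_def sscale_def fun_ops vd_rules)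
lemma sDbar_zero: "sDbar 0 = 0"
  by (auto simp: sDbar_def zero_prod_def fun_ops vd_rules)
lemma sDbar_sum: "(\<And>x. x \<in> A \<Longrightarrow> sm (g x)) \<Longrightarrow> sDbar (\<Sum>x\<in>A. g x) = (\<Sum>x\<in>A. sDbar (g x))"
  by (induction A rule: infinite_finite_induct) (simp_all add: sDbar_zero sDbar_add sm_sum)

lemma Lie_add: "sm G \<Longrightarrow> sm H \<Longrightarrow> Lie c F (G + H) = Lie c F G + Lie c F H"
  by (simp add: Lie_def Xact_def sDbar_add sm_sDbar smul_add sscale_add)
lemma Lie_sscale: "sm G \<Longrightarrow> Lie c F (sscale a G) = sscale a (Lie c F G)"
  by (simp add: Lie_def Xact_def sDbar_sscale sm_sDbar smul_sscale sscale_add sscale_uminus sscale_diff mult.commute)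
lemma Lie_zero: "Lie c F 0 = 0"
  by (simp add: Lie_def Xact_def sDbar_zero)
lemma Lie_diff: "sm G \<Longrightarrow> sm H \<Longrightarrow> Lie c F (G - H) = Lie c F G - Lie c F H"
  using Lie_add[of G "sscale (-1) H" c F] Lie_sscale[of H c F "-1"]
  by (simp add: sm_simps sscale_uminus)
lemma Lie_sum: "(\<And>x. x \<in> A \<Longrightarrow> sm (g x)) \<Longrightarrow> Lie c F (\<Sum>x\<in>A. g x) = (\<Sum>x\<in>A. Lie c F (g x))"
  by (induction A rule: infinite_finite_induct) (simp_all add: Lie_zero Lie_add sm_sum)

lemma sm_parts: "sm G \<Longrightarrow> Cs (fst G) \<and> Cs (snd G)" by (simp add: sm_def)

lemma Dbar_smul:
  assumes "sm X" "sm Y" "hp X x"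
  shows "sDbar (smul X Y) = smul (sDbar X) Y + sscale ((-1)^x) (smul X (sDbar Y))"
proof -
  obtain y0 y1 where Y: "Y = (y0, y1)" by (cases Y)
  have cy: "Cs y0" "Cs y1" using assms(2) by (auto simp: sm_def Y)
  from assms(3) show ?thesis
  proof (unfold hp_cases, elim disjE exE conjE)
    fix g assume X: "X = (g, \<lambda>_. 0)" and e: "even x"
    have "Cs g" using assms(1) by (simp add: sm_def X)
    then show ?thesis using cy e
      by (simp add: X Y sdefs fun_ops vd_rules Cs_rules neg_one_even_power algebra_simps)
  next
    fix g assume X: "X = (\<lambda>_. 0, g)" and e: "odd x"
    have "Cs g" using assms(1) by (simp add: sm_def X)
    then show ?thesis using cy e
      by (simp add: X Y sdefs fun_ops vd_rules Cs_rules neg_one_odd_power algebra_simps)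
  qed
qed

lemma Lie_smul:
  assumes "sm F" "sm G" "sm H" "hp F p" "hp G a"
  shows "Lie (\<alpha> + \<beta>) F (smul G H) = smul (Lie \<alpha> F G) H + sscale ((-1)^(p*a)) (smul G (Lie \<beta> F H))"
proof -
  obtain h0 h1 where H: "H = (h0, h1)" by (cases H)
  have ch: "Cs h0" "Cs h1" using assms(3) by (auto simp: sm_def H)
  from assms(4,5) show ?thesis
  proof (unfold hp_cases, elim disjE exE conjE)
    fix f g assume F: "F = (f, \<lambda>_. 0)" and e: "even p" and G: "G = (g, \<lambda>_. 0)" and e2: "even a"
    have "Cs f" "Cs g" using assms(1,2) by (auto simp: sm_def F G)
    then show ?thesis using ch e e2
      by (simp add: F G H sdefs fun_ops vd_rules Cs_rules neg_one_even_power algebra_simps)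
  next
    fix f g assume F: "F = (f, \<lambda>_. 0)" and e: "even p" and G: "G = (\<lambda>_. 0, g)" and e2: "odd a"
    have "Cs f" "Cs g" using assms(1,2) by (auto simp: sm_def F G)
    then show ?thesis using ch e e2
      by (simp add: F G H sdefs fun_ops vd_rules Cs_rules neg_one_even_power algebra_simps)
  next
    fix f g assume F: "F = (\<lambda>_. 0, f)" and e: "odd p" and G: "G = (g, \<lambda>_. 0)" and e2: "even a"
    have "Cs f" "Cs g" using assms(1,2) by (auto simp: sm_def F G)
    then show ?thesis using ch e e2
      by (simp add: F G H sdefs fun_ops vd_rules Cs_rules neg_one_even_power algebra_simps)
  next
    fix f g assume F: "F = (\<lambda>_. 0, f)" and e: "odd p" and G: "G = (\<lambda>_. 0, g)" and e2: "odd a"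
    have "Cs f" "Cs g" using assms(1,2) by (auto simp: sm_def F G)
    then show ?thesis using ch e e2
      by (simp add: F G H sdefs fun_ops vd_rules Cs_rules neg_one_odd_power algebra_simps)
  qed
qed

lemma Dbar_Lie:
  assumes "sm F" "sm G" "hp F p"
  shows "sDbar (Lie \<nu> F G) = sscale ((-1)^p) (Lie (\<nu> + 1/2) F (sDbar G)) + sscale \<nu> (smul (sDbar (sder F)) G)"
proof -
  obtain h0 h1 where H: "G = (h0, h1)" by (cases G)
  have ch: "Cs h0" "Cs h1" using assms(2) by (auto simp: sm_def H)
  from assms(3) show ?thesis
  proof (unfold hp_cases, elim disjE exE conjE)
    fix f assume F: "F = (f, \<lambda>_. 0)" and e: "even p"
    have "Cs f" using assms(1) by (auto simp: sm_def F)
    then show ?thesis using ch e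
      apply (simp add: F H sdefs fun_ops vd_rules Cs_rules neg_one_even_power)
      apply (simp add: fun_eq_iff algebra_simps)
      done
  next
    fix f assume F: "F = (\<lambda>_. 0, f)" and e: "odd p"
    have "Cs f" using assms(1) by (auto simp: sm_def F)
    then show ?thesis using ch e
      apply (simp add: F H sdefs fun_ops vd_rules Cs_rules neg_one_odd_power)
      apply (simp add: fun_eq_iff algebra_simps)
      done
  qed
qed

section \<open>Super binomials\<close>

lemma nat_par_cases: fixes n :: nat obtains a where "n = 2*a" | a where "n = 2*a+1"
  by (metis oddE evenE)

lemma sb0_rec:
  assumes "1 \<le> r"
  shows "(of_nat (sbinom (r + i) r) :: complex) =
     (if 2 \<le> r then of_nat (sbinom (r - 1 + i) (r - 1)) else 0)
     + (if 1 \<le> i then (-1)^r * of_nat (sbinom (r + i - 1) r) else 0)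
     + (if r = 1 then 1 else 0)"
proof -
  obtain a where ra: "r = 2*a+2 \<or> r = 2*a+1"
  proof (cases r rule: nat_par_cases)
    case (1 a) then show ?thesis using assms that[of "a - 1"] by (cases a) auto
  next
    case (2 a) then show ?thesis using that by auto
  qed
  obtain b where "i = 2*b \<or> i = 2*b+1" by (cases i rule: nat_par_cases) auto
  with ra have "(r = 2*a+2 \<or> r = 2*a+1) \<and> (i = 2*b \<or> i = 2*b+1)" by blast
  then show ?thesis
    apply (elim conjE disjE; cases a; cases b)
    apply (simp_all add: sbinom_def)
    done
qed

lemma bcoef_rec:
  assumes "1 \<le> r"
  shows "bcoef r i l =
     (if 2 \<le> r then bcoef (r - 1) i l else 0)
     + (if 1 \<le> i then (-1)^r * bcoef r (i - 1) l else 0)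
     + (if r = 1 then l + of_nat i / 2 else 0)"
proof -
  obtain a where ra: "r = 2*a+2 \<or> r = 2*a+1"
  proof (cases r rule: nat_par_cases)
    case (1 a) then show ?thesis using assms that[of "a - 1"] by (cases a) auto
  next
    case (2 a) then show ?thesis using that by auto
  qed
  obtain b where "i = 2*b \<or> i = 2*b+1" by (cases i rule: nat_par_cases) auto
  with ra have "(r = 2*a+2 \<or> r = 2*a+1) \<and> (i = 2*b \<or> i = 2*b+1)" by blast
  then show ?thesis
    apply (elim conjE disjE; cases a; cases b)
    apply (simp_all add: bcoef_def sbinom_def binomial_eq_0 field_simps)
    done
qed



section \<open>One-variable commutator\<close>

lemma comb:
  fixes T :: "nat \<Rightarrow> nat \<Rightarrow> sfun" and p m :: nat and l :: complex
  defines "cc \<equiv> \<lambda>m r. (-1::complex)^(p*(m-r)) * bcoef r (m-r) l"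
  shows "(\<Sum>r\<in>{1..Suc m}. sscale (cc (Suc m) r) (T r (Suc m - r))) =
    sscale ((-1)^(m*p) * (l + of_nat m / 2)) (T 1 m)
    + (\<Sum>r\<in>{1..m}. sscale (cc m r) (T (Suc r) (m - r)))
    + (\<Sum>r\<in>{1..m}. sscale (cc m r * (-1)^(p+r)) (T r (Suc (m - r))))"
proof -
  have "(\<Sum>r\<in>{1..Suc m}. sscale (cc (Suc m) r) (T r (Suc m - r))) =
     (\<Sum>r\<in>{1..Suc m}. (if r = 1 then sscale ((-1)^(m*p) * (l + of_nat m / 2)) (T 1 m) else 0)
        + (if 2 \<le> r then sscale (cc m (r - 1)) (T r (Suc m - r)) else 0)
        + (if r \<le> m then sscale (cc m r * (-1)^(p+r)) (T r (Suc (m - r))) else 0))"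
  proof (rule sum.cong[OF refl], goal_cases)
    case (1 r)
    then have r: "r \<in> {1..Suc m}" by simp
    have e: "cc (Suc m) r = (if r = 1 then (-1)^(m*p) * (l + of_nat m / 2) else 0)
       + (if 2 \<le> r then cc m (r - 1) else 0) + (if r \<le> m then cc m r * (-1)^(p+r) else 0)"
    proof (cases "r \<le> m")
      case True
      then obtain k where m: "m = r + k" using le_Suc_ex by blast
      have b: "bcoef r (Suc k) l = (if 2 \<le> r then bcoef (r - 1) (Suc k) l else 0)
         + (-1)^r * bcoef r k l + (if r = 1 then l + of_nat (Suc k) / 2 else 0)"
        using r bcoef_rec[of r "Suc k" l] by simp
      show ?thesis
      proof (cases "r = 1")
        case True
        then have b1: "bcoef (Suc 0) (Suc k) l = l + of_nat (Suc k) / 2 - bcoef (Suc 0) k l" using b by simp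
        show ?thesis using True
          by (simp add: cc_def m b1 power_add power_mult_distrib algebra_simps add_divide_distrib)
      next
        case False
        then show ?thesis using r b
          by (simp add: cc_def m Suc_diff_le power_add power_mult_distrib algebra_simps)
      qed
    next
      case False
      then have m: "r = Suc m" using r by simp
      have b: "bcoef r 0 l = (if 2 \<le> r then bcoef (r - 1) 0 l else 0)
         + (if r = 1 then l else 0)"
        using r bcoef_rec[of r 0 l] by simp
      show ?thesis using r b
        by (cases m) (simp_all add: cc_def m)
    qed
    show ?case
      unfolding e sscale_add(2) using r by (cases "r = 1") (simp_all add: Suc_diff_le)
  qed
  also have "\<dots> = sscale ((-1)^(m*p) * (l + of_nat m / 2)) (T 1 m)
    + (\<Sum>r\<in>{1..Suc m}. if 2 \<le> r then sscale (cc m (r - 1)) (T r (Suc m - r)) else 0)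
    + (\<Sum>r\<in>{1..Suc m}. if r \<le> m then sscale (cc m r * (-1)^(p+r)) (T r (Suc (m - r))) else 0)"
    by (simp add: sum.distrib)
  also have "(\<Sum>r\<in>{1..Suc m}. if 2 \<le> r then sscale (cc m (r - 1)) (T r (Suc m - r)) else 0)
     = (\<Sum>r\<in>{1..m}. sscale (cc m r) (T (Suc r) (m - r)))"
  proof -
    have "(\<Sum>r\<in>{1..Suc m}. if 2 \<le> r then sscale (cc m (r - 1)) (T r (Suc m - r)) else 0)
       = (\<Sum>r\<in>{Suc 1..Suc m}. sscale (cc m (r - 1)) (T r (Suc m - r)))"
      by (rule sum.mono_neutral_cong_right) auto
    also have "\<dots> = (\<Sum>r\<in>{1..m}. sscale (cc m r) (T (Suc r) (m - r)))"
      by (simp only: sum.shift_bounds_cl_Suc_ivl) simp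
    finally show ?thesis .
  qed
  also have "(\<Sum>r\<in>{1..Suc m}. if r \<le> m then sscale (cc m r * (-1)^(p+r)) (T r (Suc (m - r))) else 0)
     = (\<Sum>r\<in>{1..m}. sscale (cc m r * (-1)^(p+r)) (T r (Suc (m - r))))"
    by (rule sum.mono_neutral_cong_right) auto
  finally show ?thesis .
qed

lemma hp_Dbarn: "hp G a \<Longrightarrow> hp ((sDbar ^^ r) G) (a + r)"
  by (induction r) (auto simp: hp_simps)

lemma Dbar_Lie_pow:
  assumes F: "sm F" "hp F p" and f: "sm f"
  shows "(sDbar ^^ m) (Lie l F f) = sscale ((-1)^(m*p)) (Lie (l + of_nat m / 2) F ((sDbar ^^ m) f))
     + (\<Sum>r\<in>{1..m}. sscale ((-1)^(p*(m-r)) * bcoef r (m-r) l)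
          (smul ((sDbar ^^ r) (sder F)) ((sDbar ^^ (m - r)) f)))"
proof (induction m)
  case 0
  then show ?case by simp
next
  case (Suc m)
  define T where "T \<equiv> \<lambda>r k. smul ((sDbar ^^ r) (sder F)) ((sDbar ^^ k) f)"
  define cc where "cc \<equiv> \<lambda>m r. (-1::complex)^(p*(m-r)) * bcoef r (m-r) l"
  have smT: "sm (T r k)" for r k unfolding T_def by (simp add: sm_simps sm_Dbarn F f)
  have DT: "sDbar (T r k) = T (Suc r) k + sscale ((-1)^(p+r)) (T r (Suc k))" for r k
    unfolding T_def
    by (subst Dbar_smul[where x="p + r"]) (simp_all add: sm_simps sm_Dbarn F f hp_Dbarn hp_simps)
  have IH: "(sDbar ^^ m) (Lie l F f) = sscale ((-1)^(m*p)) (Lie (l + of_nat m / 2) F ((sDbar ^^ m) f))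
     + (\<Sum>r\<in>{1..m}. sscale (cc m r) (T r (m - r)))"
    using Suc.IH unfolding T_def cc_def .
  have "(sDbar ^^ Suc m) (Lie l F f) = sDbar ((sDbar ^^ m) (Lie l F f))" by simp
  also have "\<dots> = sscale ((-1)^(m*p)) (sDbar (Lie (l + of_nat m / 2) F ((sDbar ^^ m) f)))
     + (\<Sum>r\<in>{1..m}. sscale (cc m r) (sDbar (T r (m - r))))"
    unfolding IH
    by (simp add: sDbar_add sDbar_sscale sDbar_sum sm_simps sm_sum sm_Lie sm_Dbarn F f smT)
  also have "\<dots> = sscale ((-1)^(Suc m*p)) (Lie (l + of_nat (Suc m) / 2) F ((sDbar ^^ Suc m) f))
     + (sscale ((-1)^(m*p) * (l + of_nat m / 2)) (T 1 m)
    + (\<Sum>r\<in>{1..m}. sscale (cc m r) (T (Suc r) (m - r)))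
    + (\<Sum>r\<in>{1..m}. sscale (cc m r * (-1)^(p+r)) (T r (Suc (m - r)))))"
  proof -
    have "(\<Sum>r\<in>{1..m}. sscale (cc m r) (sDbar (T r (m - r)))) =
      (\<Sum>r\<in>{1..m}. sscale (cc m r) (T (Suc r) (m - r)))
      + (\<Sum>r\<in>{1..m}. sscale (cc m r * (-1)^(p+r)) (T r (Suc (m - r))))"
      by (simp add: DT sscale_add sum.distrib)
    moreover have "sDbar (Lie (l + of_nat m / 2) F ((sDbar ^^ m) f)) =
       sscale ((-1)^p) (Lie (l + of_nat (Suc m) / 2) F ((sDbar ^^ Suc m) f))
       + sscale (l + of_nat m / 2) (T 1 m)"
    proof -
      have e: "l + of_nat m / 2 + 1 / 2 = l + of_nat (Suc m) / (2::complex)" by (simp add: field_simps)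
      show ?thesis by (simp add: Dbar_Lie[OF F(1) _ F(2)] sm_Dbarn f T_def e)
    qed
    ultimately show ?thesis
      apply (simp add: sscale_add power_add mult.commute add.assoc)
      apply (simp only: sscale_add(2)[symmetric])
      apply (simp add: algebra_simps)
      done
  qed
  also have "\<dots> = sscale ((-1)^(Suc m*p)) (Lie (l + of_nat (Suc m) / 2) F ((sDbar ^^ Suc m) f))
     + (\<Sum>r\<in>{1..Suc m}. sscale (cc (Suc m) r) (T r (Suc m - r)))"
    using comb[where T=T and p=p and m=m and l=l] unfolding cc_def by simp
  finally show ?case unfolding T_def cc_def .
qed


section \<open>Products\<close>

definition prodL :: "nat list \<Rightarrow> (nat \<Rightarrow> sfun) \<Rightarrow> sfun" where
  "prodL xs g = foldr (\<lambda>p acc. smul (g p) acc) xs sone"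

lemma foldr_acc: "foldr (\<lambda>p acc. smul (g p) acc) xs Y = smul (prodL xs g) Y"
  by (induction xs) (simp_all add: prodL_def smul_assoc)

lemma prodL_simps[simp]: "prodL [] g = sone" "prodL (x # xs) g = smul (g x) (prodL xs g)"
  by (simp_all add: prodL_def)

lemma prodL_append: "prodL (xs @ ys) g = smul (prodL xs g) (prodL ys g)"
  by (induction xs) (simp_all add: smul_assoc)

lemma prodL_cong: "(\<And>x. x \<in> set xs \<Longrightarrow> g x = h x) \<Longrightarrow> prodL xs g = prodL xs h"
  by (induction xs) auto

lemma sprod_prodL: "sprod n g = prodL [1..<n+1] g"
  by (simp add: sprod_def prodL_def)

lemma sm_prodL: "(\<And>x. x \<in> set xs \<Longrightarrow> sm (g x)) \<Longrightarrow> sm (prodL xs g)"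
  by (induction xs) (auto simp: sm_simps)

lemma hp_prodL: "(\<And>x. x \<in> set xs \<Longrightarrow> hp (g x) (par x)) \<Longrightarrow> hp (prodL xs g) (sum_list (map par xs))"
  by (induction xs) (auto simp: hp_simps hp_smul)

lemma upt_split: "1 \<le> p \<Longrightarrow> p \<le> n \<Longrightarrow> [1..<n+1] = [1..<p] @ p # [Suc p..<n+1]"
proof -
  assume a: "1 \<le> p" "p \<le> n"
  have "[1..<n+1] = [1..<p] @ [p..<p + (n+1-p)]" using a upt_add_eq_append[of 1 p "n+1-p"] by simp
  also have "[p..<p + (n+1-p)] = p # [Suc p..<n+1]" using a by (simp add: upt_conv_Cons)
  finally show ?thesis .
qed

lemma sprod_split: assumes "p \<in> {1..n}"
  shows "sprod n g = smul (prodL [1..<p] g) (smul (g p) (prodL [Suc p..<n+1] g))"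
proof -
  have "[1..<n+1] = [1..<p] @ p # [Suc p..<n+1]" using assms upt_split by auto
  then show ?thesis by (simp only: sprod_prodL prodL_append prodL_simps)
qed

lemma sprod_split_upd: assumes p: "p \<in> {1..n}"
  shows "sprod n (g(p := W)) = smul (prodL [1..<p] g) (smul W (prodL [Suc p..<n+1] g))"
proof -
  have a: "prodL [1..<p] (g(p := W)) = prodL [1..<p] g" by (rule prodL_cong) auto
  have b: "prodL [Suc p..<n+1] (g(p := W)) = prodL [Suc p..<n+1] g" by (rule prodL_cong) auto
  show ?thesis using sprod_split[OF p, of "g(p := W)"] by (simp only: a b fun_upd_same)
qed

lemma sprod_upd_smul: "p \<in> {1..n} \<Longrightarrow> sprod n (g(p := smul X Y)) = smul X (sprod n (g(p := Y)))"
proof -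
  assume p: "p \<in> {1..n}"
  have c: "smul A (smul (smul X Y) B) = smul X (smul A (smul Y B))" for A B
    by (simp add: smul_def algebra_simps)
  show ?thesis using p by (simp only: sprod_split_upd[OF p] c)
qed

lemma sprod_upd_lin: "p \<in> {1..n} \<Longrightarrow> sprod n (g(p := X)) = smul X (sprod n (g(p := sone)))"
  using sprod_upd_smul[of p n g X sone] by simp

lemma sprod_upd_add: assumes p: "p \<in> {1..n}"
  shows "sprod n (g(p := X + Y)) = sprod n (g(p := X)) + sprod n (g(p := Y))"
proof -
  have "sprod n (g(p := X + Y)) = smul (X + Y) (sprod n (g(p := sone)))" by (rule sprod_upd_lin[OF p])
  also have "\<dots> = smul X (sprod n (g(p := sone))) + smul Y (sprod n (g(p := sone)))" by (rule smul_add)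
  also have "\<dots> = sprod n (g(p := X)) + sprod n (g(p := Y))"
    by (simp only: sprod_upd_lin[OF p, of g X, symmetric] sprod_upd_lin[OF p, of g Y, symmetric])
  finally show ?thesis .
qed
lemma sprod_upd_sscale: assumes p: "p \<in> {1..n}"
  shows "sprod n (g(p := sscale c X)) = sscale c (sprod n (g(p := X)))"
proof -
  have "sprod n (g(p := sscale c X)) = smul (sscale c X) (sprod n (g(p := sone)))" by (rule sprod_upd_lin[OF p])
  also have "\<dots> = sscale c (smul X (sprod n (g(p := sone))))" by (rule smul_sscale)
  also have "\<dots> = sscale c (sprod n (g(p := X)))"
    by (simp only: sprod_upd_lin[OF p, of g X, symmetric])
  finally show ?thesis .
qed
lemma sprod_upd_sum: assumes p: "p \<in> {1..n}"
  shows "sprod n (g(p := \<Sum>x\<in>A. h x)) = (\<Sum>x\<in>A. sprod n (g(p := h x)))"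
proof -
  have "sprod n (g(p := \<Sum>x\<in>A. h x)) = smul (\<Sum>x\<in>A. h x) (sprod n (g(p := sone)))" by (rule sprod_upd_lin[OF p])
  also have "\<dots> = (\<Sum>x\<in>A. smul (h x) (sprod n (g(p := sone))))" by (rule smul_sum)
  also have "\<dots> = (\<Sum>x\<in>A. sprod n (g(p := h x)))"
    by (simp only: sprod_upd_lin[OF p, of g "h _", symmetric])
  finally show ?thesis .
qed

lemma sprod_Suc: "sprod (Suc n) g = smul (sprod n g) (g (Suc n))"
  by (simp add: sprod_prodL prodL_append)

lemma sm_sprod: "(\<And>x. x \<in> {1..n} \<Longrightarrow> sm (g x)) \<Longrightarrow> sm (sprod n g)"
  unfolding sprod_prodL by (rule sm_prodL) auto

lemma hp_sprod: "(\<And>x. x \<in> {1..n} \<Longrightarrow> hp (g x) (par x)) \<Longrightarrow> hp (sprod n g) (\<Sum>s\<in>{1..n}. par s)"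
proof -
  assume h: "\<And>x. x \<in> {1..n} \<Longrightarrow> hp (g x) (par x)"
  have "hp (prodL [1..<n+1] g) (sum_list (map par [1..<n+1]))" by (rule hp_prodL) (auto intro: h)
  moreover have "sum_list (map par [1..<n+1]) = (\<Sum>s\<in>{1..n}. par s)"
  proof -
    have "set [1..<n+1] = {1..n}" by auto
    then show ?thesis by (metis sum_set_upt_conv_sum_list_nat)
  qed
  ultimately show ?thesis by (simp add: sprod_prodL)
qed

lemma hp_prefix: "(\<And>x. x \<in> {1..<p} \<Longrightarrow> hp (g x) (par x)) \<Longrightarrow> hp (prodL [1..<p] g) (\<Sum>s\<in>{1..<p}. par s)"
proof -
  assume h: "\<And>x. x \<in> {1..<p} \<Longrightarrow> hp (g x) (par x)"
  have "hp (prodL [1..<p] g) (sum_list (map par [1..<p]))" by (rule hp_prodL) (auto intro: h)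
  then show ?thesis by (simp add: sum_set_upt_conv_sum_list_nat[symmetric])
qed

lemma Lie_sone: "Lie 0 F sone = 0"
  by (simp add: sdefs vd_const zero_prod_def fun_ops)

lemma Lie_sprod:
  assumes F: "sm F" "hp F pF"
    and h: "\<And>s. s \<in> {1..n} \<Longrightarrow> sm (h s) \<and> hp (h s) (par s)"
  shows "Lie (\<Sum>s\<in>{1..n}. \<nu> s) F (sprod n h) =
    (\<Sum>p\<in>{1..n}. sscale ((-1)^(pF * (\<Sum>s\<in>{1..<p}. par s))) (sprod n (h(p := Lie (\<nu> p) F (h p)))))"
  using h
proof (induction n)
  case 0
  then show ?case by (simp add: sprod_def Lie_sone)
next
  case (Suc n)
  have hs: "sm (h s)" "hp (h s) (par s)" if "s \<in> {1..n}" for s using Suc.prems that by auto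
  have hn: "sm (h (Suc n))" "hp (h (Suc n)) (par (Suc n))" using Suc.prems by auto
  have IH: "Lie (\<Sum>s\<in>{1..n}. \<nu> s) F (sprod n h) =
    (\<Sum>p\<in>{1..n}. sscale ((-1)^(pF * (\<Sum>s\<in>{1..<p}. par s))) (sprod n (h(p := Lie (\<nu> p) F (h p)))))"
    by (rule Suc.IH) (simp add: hs)
  have smn: "sm (sprod n h)" by (rule sm_sprod) (simp add: hs)
  have hpn: "hp (sprod n h) (\<Sum>s\<in>{1..n}. par s)" by (rule hp_sprod) (simp add: hs)
  have e1: "(\<Sum>s\<in>{1..Suc n}. \<nu> s) = (\<Sum>s\<in>{1..n}. \<nu> s) + \<nu> (Suc n)" by simp
  have e2: "(\<Sum>s\<in>{1..<Suc n}. par s) = (\<Sum>s\<in>{1..n}. par s)"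
    by (simp add: atLeastLessThanSuc_atLeastAtMost)
  have e3: "sprod (Suc n) (h(p := X)) = smul (sprod n (h(p := X))) (h (Suc n))" if "p \<in> {1..n}" for p X
    using that by (simp add: sprod_Suc)
  have e4: "sprod n (h(Suc n := X)) = sprod n h" for X
    unfolding sprod_prodL by (rule prodL_cong) auto
  have "Lie (\<Sum>s\<in>{1..Suc n}. \<nu> s) F (sprod (Suc n) h) =
     smul (Lie (\<Sum>s\<in>{1..n}. \<nu> s) F (sprod n h)) (h (Suc n))
     + sscale ((-1)^(pF * (\<Sum>s\<in>{1..n}. par s))) (smul (sprod n h) (Lie (\<nu> (Suc n)) F (h (Suc n))))"
    unfolding e1 sprod_Suc by (rule Lie_smul[OF F(1) smn hn(1) F(2) hpn])
  also have "\<dots> = (\<Sum>p\<in>{1..n}. sscale ((-1)^(pF * (\<Sum>s\<in>{1..<p}. par s))) (sprod (Suc n) (h(p := Lie (\<nu> p) F (h p)))))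
     + sscale ((-1)^(pF * (\<Sum>s\<in>{1..<Suc n}. par s))) (sprod (Suc n) (h(Suc n := Lie (\<nu> (Suc n)) F (h (Suc n)))))"
    unfolding IH e2 by (simp add: smul_sum smul_sscale e3 sprod_Suc e4)
  also have "\<dots> = (\<Sum>p\<in>{1..Suc n}. sscale ((-1)^(pF * (\<Sum>s\<in>{1..<p}. par s))) (sprod (Suc n) (h(p := Lie (\<nu> p) F (h p)))))"
    by simp
  finally show ?case .
qed


section \<open>Multi-indices\<close>

definition Iset :: "nat \<Rightarrow> nat \<Rightarrow> (nat \<Rightarrow> nat) set" where
  "Iset n K = {i. (\<forall>p. (p < 1 \<or> n < p) \<longrightarrow> i p = 0) \<and> msize n i \<le> K}"

definition eps :: "nat \<Rightarrow> (nat \<Rightarrow> nat) \<Rightarrow> (nat \<Rightarrow> nat) \<Rightarrow> nat" where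
  "eps n q i = (\<Sum>p\<in>{1..n-1}. q p * (\<Sum>s\<in>{p+1..n}. i s))"

definition Tm :: "nat \<Rightarrow> (nat \<Rightarrow> nat) \<Rightarrow> (nat \<Rightarrow> sfun) \<Rightarrow> (nat \<Rightarrow> nat) \<Rightarrow> sfun \<Rightarrow> sfun" where
  "Tm n q f i b = sscale ((-1)^(eps n q i)) (smul b (sprod n (\<lambda>p. (sDbar ^^ i p) (f p))))"

lemma IsetD: assumes "i \<in> Iset n K" shows "\<And>p. p \<notin> {1..n} \<Longrightarrow> i p = 0" "msize n i \<le> K"
proof -
  have a: "\<forall>p. (p < 1 \<or> n < p) \<longrightarrow> i p = 0" using assms unfolding Iset_def mem_Collect_eq by (rule conjunct1)
  show "msize n i \<le> K" using assms unfolding Iset_def mem_Collect_eq by (rule conjunct2)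
  fix p assume "p \<notin> {1..n}"
  then have "p < 1 \<or> n < p" by auto
  then show "i p = 0" by (rule a[rule_format])
qed

lemma IsetI: assumes "\<And>p. p \<notin> {1..n} \<Longrightarrow> i p = 0" "msize n i \<le> K" shows "i \<in> Iset n K"
proof -
  have "\<forall>p. (p < 1 \<or> n < p) \<longrightarrow> i p = 0" using assms(1) by auto
  then show ?thesis using assms(2) unfolding Iset_def by simp
qed

lemma finite_Iset: "finite (Iset n K)"
proof -
  have "Iset n K \<subseteq> {i. \<forall>x. (x \<in> {1..n} \<longrightarrow> i x \<in> {0..K}) \<and> (x \<notin> {1..n} \<longrightarrow> i x = 0)}"
  proof
    fix i assume i: "i \<in> Iset n K"
    have "i x \<le> K" if "x \<in> {1..n}" for x
    proof -
      have "i x \<le> msize n i" unfolding msize_def using that by (intro member_le_sum) auto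
      then show ?thesis using IsetD(2)[OF i] by simp
    qed
    moreover have "i x = 0" if "x \<notin> {1..n}" for x
      using IsetD(1)[OF i that] .
    ultimately show "i \<in> {i. \<forall>x. (x \<in> {1..n} \<longrightarrow> i x \<in> {0..K}) \<and> (x \<notin> {1..n} \<longrightarrow> i x = 0)}"
      by auto
  qed
  moreover have "finite {i. \<forall>x. (x \<in> {1..n} \<longrightarrow> i x \<in> {0..K}) \<and> (x \<notin> {1..n} \<longrightarrow> i x = (0::nat))}"
    by (rule finite_set_of_finite_funs) auto
  ultimately show ?thesis by (rule finite_subset)
qed

lemma Iset_UN: "(\<Union>l\<in>{0..K}. idx n l) = Iset n K"
  by (auto simp: idx_def Iset_def msize_def)

lemma opapp_Tm: "opapp n K a q f = (\<Sum>i\<in>Iset n K. Tm n q f i (a i))"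
proof -
  have fin: "finite (idx n l)" if "l \<in> {0..K}" for l
  proof (rule finite_subset[OF _ finite_Iset[of n K]])
    show "idx n l \<subseteq> Iset n K" unfolding Iset_UN[symmetric] using that by blast
  qed
  have "opapp n K a q f = (\<Sum>l\<in>{0..K}. \<Sum>i\<in>idx n l. Tm n q f i (a i))"
    unfolding opapp_def Tm_def eps_def ..
  also have "\<dots> = (\<Sum>i\<in>(\<Union>l\<in>{0..K}. idx n l). Tm n q f i (a i))"
  proof (rule sum.UNION_disjoint[symmetric])
    show "\<forall>i\<in>{0..K}. \<forall>j\<in>{0..K}. i \<noteq> j \<longrightarrow> idx n i \<inter> idx n j = {}"
      unfolding idx_def by blast
  qed (simp_all add: fin)
  finally show ?thesis by (simp add: Iset_UN)
qed

lemma Tm_lin: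
  "Tm n q f i (x + y) = Tm n q f i x + Tm n q f i y"
  "Tm n q f i (x - y) = Tm n q f i x - Tm n q f i y"
  "Tm n q f i (\<Sum>z\<in>A. h z) = (\<Sum>z\<in>A. Tm n q f i (h z))"
  "Tm n q f i 0 = 0"
  by (simp_all add: Tm_def smul_add smul_diff sscale_add sscale_diff smul_sum sscale_sum)

lemma msize_upd: "t \<in> {1..n} \<Longrightarrow> msize n (i(t := v)) + i t = msize n i + v"
proof -
  assume t: "t \<in> {1..n}"
  have "msize n (i(t := v)) = (i(t := v)) t + (\<Sum>p\<in>{1..n} - {t}. (i(t := v)) p)"
    unfolding msize_def using t by (rule sum.remove[of "{1..n}" t, OF finite_atLeastAtMost])
  also have "(\<Sum>p\<in>{1..n} - {t}. (i(t := v)) p) = (\<Sum>p\<in>{1..n} - {t}. i p)"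
    by (rule sum.cong) auto
  finally have "msize n (i(t := v)) = v + (\<Sum>p\<in>{1..n} - {t}. i p)" by (simp only: fun_upd_same)
  moreover have "msize n i = i t + (\<Sum>p\<in>{1..n} - {t}. i p)"
    unfolding msize_def using t by (rule sum.remove[of "{1..n}" t, OF finite_atLeastAtMost])
  ultimately show ?thesis by simp
qed

lemma reindex:
  assumes t: "t \<in> {1..n}"
  shows "(\<Sum>i\<in>Iset n K. \<Sum>r\<in>{1..K - msize n i}. H i r) =
         (\<Sum>j\<in>Iset n K. \<Sum>r\<in>{1..j t}. H (j(t := j t - r)) r)"
proof -
  have "(\<Sum>i\<in>Iset n K. \<Sum>r\<in>{1..K - msize n i}. H i r) =
        (\<Sum>(i, r)\<in>Sigma (Iset n K) (\<lambda>i. {1..K - msize n i}). H i r)"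
    by (rule sum.Sigma) (auto simp: finite_Iset)
  also have "\<dots> = (\<Sum>(j, r)\<in>Sigma (Iset n K) (\<lambda>j. {1..j t}). H (j(t := j t - r)) r)"
  proof (rule sum.reindex_bij_witness[where i="\<lambda>(j, r). (j(t := j t - r), r)" and j="\<lambda>(i, r). (i(t := i t + r), r)"])
    fix a assume "a \<in> Sigma (Iset n K) (\<lambda>i. {1..K - msize n i})"
    then obtain i r where a: "a = (i, r)" "i \<in> Iset n K" "r \<in> {1..K - msize n i}" by auto
    have m: "msize n (i(t := i t + r)) = msize n i + r" using msize_upd[OF t, of i "i t + r"] by simp
    show "(case case a of (i, r) \<Rightarrow> (i(t := i t + r), r) of (j, r) \<Rightarrow> (j(t := j t - r), r)) = a"
      using a by simp
    have "i(t := i t + r) \<in> Iset n K"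
    proof (rule IsetI)
      show "(i(t := i t + r)) p = 0" if "p \<notin> {1..n}" for p using IsetD(1)[OF a(2) that] t that by auto
      show "msize n (i(t := i t + r)) \<le> K" using m a(3) IsetD(2)[OF a(2)] by auto
    qed
    then show "(case a of (i, r) \<Rightarrow> (i(t := i t + r), r)) \<in> Sigma (Iset n K) (\<lambda>j. {1..j t})"
      using a(1,3) by simp
    show "(case case a of (i, r) \<Rightarrow> (i(t := i t + r), r) of (j, r) \<Rightarrow> H (j(t := j t - r)) r) =
          (case a of (i, r) \<Rightarrow> H i r)"
      using a by simp
  next
    fix b assume "b \<in> Sigma (Iset n K) (\<lambda>j. {1..j t})"
    then obtain j r where b: "b = (j, r)" "j \<in> Iset n K" "r \<in> {1..j t}" by auto
    have m: "msize n (j(t := j t - r)) + j t = msize n j + (j t - r)" using msize_upd[OF t, of j "j t - r"] by simp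
    have jt: "j(t := j t - r + r) = j" using b(3) by simp
    show "(case case b of (j, r) \<Rightarrow> (j(t := j t - r), r) of (i, r) \<Rightarrow> (i(t := i t + r), r)) = b"
      using b(1) by (simp add: jt)
    have z: "msize n j \<le> K" using IsetD(2)[OF b(2)] .
    have jle: "j t \<le> msize n j" unfolding msize_def using t by (intro member_le_sum) auto
    have m2: "msize n (j(t := j t - r)) = msize n j - r" using m jle b(3) by simp
    have "j(t := j t - r) \<in> Iset n K"
    proof (rule IsetI)
      show "(j(t := j t - r)) p = 0" if "p \<notin> {1..n}" for p using IsetD(1)[OF b(2) that] t that by auto
      show "msize n (j(t := j t - r)) \<le> K" using m2 z by simp
    qed
    moreover have "r \<in> {1..K - msize n (j(t := j t - r))}" using m2 b(3) jle z by simp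
    ultimately show "(case b of (j, r) \<Rightarrow> (j(t := j t - r), r)) \<in> Sigma (Iset n K) (\<lambda>i. {1..K - msize n i})"
      using b(1) by simp
  qed
  also have "\<dots> = (\<Sum>j\<in>Iset n K. \<Sum>r\<in>{1..j t}. H (j(t := j t - r)) r)"
    by (rule sum.Sigma[symmetric]) (auto simp: finite_Iset)
  finally show ?thesis .
qed



lemma neg1_pow_eq: "even (e1 + e2) \<Longrightarrow> (-1::complex)^e1 = (-1)^e2"
  by (metis (no_types, lifting) even_add neg_one_even_power neg_one_odd_power)

lemma eps_q_upd:
  assumes p: "p \<in> {1..n}"
  shows "eps n (q(p := q p + c)) j = eps n q j + c * (\<Sum>s\<in>{p+1..n}. j s)"
proof (cases "p \<le> n - 1")
  case True
  then have pin: "p \<in> {1..n-1}" using p by auto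
  have "eps n (q(p := q p + c)) j = (q p + c) * (\<Sum>s\<in>{p+1..n}. j s)
      + (\<Sum>p'\<in>{1..n-1} - {p}. (q(p := q p + c)) p' * (\<Sum>s\<in>{p'+1..n}. j s))"
    unfolding eps_def using pin by (subst sum.remove[of _ p]) auto
  also have "(\<Sum>p'\<in>{1..n-1} - {p}. (q(p := q p + c)) p' * (\<Sum>s\<in>{p'+1..n}. j s))
     = (\<Sum>p'\<in>{1..n-1} - {p}. q p' * (\<Sum>s\<in>{p'+1..n}. j s))"
    by (rule sum.cong) auto
  also have "eps n q j = q p * (\<Sum>s\<in>{p+1..n}. j s) + (\<Sum>p'\<in>{1..n-1} - {p}. q p' * (\<Sum>s\<in>{p'+1..n}. j s))"
    unfolding eps_def using pin by (subst sum.remove[of _ p]) auto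
  ultimately show ?thesis by (simp add: algebra_simps fun_upd_def)
next
  case False
  then have pn: "p = n" using p by auto
  have "eps n (q(p := q p + c)) j = eps n q j"
    unfolding eps_def by (rule sum.cong) (use False in auto)
  then show ?thesis using pn by simp
qed

lemma eps_j_upd:
  assumes p: "p \<in> {1..n}" and r: "r \<le> j p"
  shows "eps n q j = eps n q (j(p := j p - r)) + r * (\<Sum>s\<in>{1..<p}. q s)"
proof -
  have S: "(\<Sum>s\<in>{p'+1..n}. j s) = (\<Sum>s\<in>{p'+1..n}. (j(p := j p - r)) s) + (if p' < p then r else 0)"
    if "p' \<in> {1..n-1}" for p'
  proof (cases "p' < p")
    case True
    then have pin: "p \<in> {p'+1..n}" using p by auto
    have "(\<Sum>s\<in>{p'+1..n}. j s) = j p + (\<Sum>s\<in>{p'+1..n} - {p}. j s)"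
      using pin by (subst sum.remove[of _ p]) auto
    moreover have "(\<Sum>s\<in>{p'+1..n}. (j(p := j p - r)) s) = (j p - r) + (\<Sum>s\<in>{p'+1..n} - {p}. (j(p := j p - r)) s)"
      using pin by (subst sum.remove[of _ p]) auto
    moreover have "(\<Sum>s\<in>{p'+1..n} - {p}. (j(p := j p - r)) s) = (\<Sum>s\<in>{p'+1..n} - {p}. j s)"
      by (rule sum.cong) auto
    ultimately show ?thesis using True r by simp
  next
    case False
    then show ?thesis by (auto intro!: sum.cong)
  qed
  define j' where "j' = j(p := j p - r)"
  have "eps n q j = (\<Sum>p'\<in>{1..n-1}. q p' * ((\<Sum>s\<in>{p'+1..n}. j' s) + (if p' < p then r else 0)))"
    unfolding eps_def j'_def by (rule sum.cong[OF refl], subst S) auto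
  also have "\<dots> = (\<Sum>p'\<in>{1..n-1}. q p' * (\<Sum>s\<in>{p'+1..n}. j' s)) + (\<Sum>p'\<in>{1..n-1}. if p' < p then r * q p' else 0)"
    by (simp add: distrib_left sum.distrib mult.commute, rule sum.cong) auto
  also have "(\<Sum>p'\<in>{1..n-1}. q p' * (\<Sum>s\<in>{p'+1..n}. j' s)) = eps n q (j(p := j p - r))"
    unfolding eps_def j'_def ..
  also have "(\<Sum>p'\<in>{1..n-1}. if p' < p then r * q p' else 0) = (\<Sum>p'\<in>{1..<p}. r * q p')"
    using p by (intro sum.mono_neutral_cong_right) auto
  finally show ?thesis by (simp only: sum_distrib_left)
qed

lemma msize_split:
  assumes p: "p \<in> {1..n}"
  shows "msize n j = (\<Sum>s\<in>{1..<p}. j s) + j p + (\<Sum>s\<in>{p+1..n}. j s)"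
proof -
  have "{1..n} = {1..<p} \<union> {p..n}" using p by auto
  then have "msize n j = (\<Sum>s\<in>{1..<p}. j s) + (\<Sum>s\<in>{p..n}. j s)"
    unfolding msize_def by (simp add: sum.union_disjoint ivl_disj_int)
  moreover have "(\<Sum>s\<in>{p..n}. j s) = j p + (\<Sum>s\<in>{p+1..n}. j s)"
    using p by (simp add: sum.atLeast_Suc_atMost)
  ultimately show ?thesis by simp
qed


lemma sign_S1:
  fixes pF pA pb J jp S ee Q :: nat
  assumes "pF < 2" "pA = (pb + (J + jp + S)) mod 2"
  shows "even ((ee + pF*pb + pF*(Q + J)) + (pA*pF + pF*Q + (ee + pF*S) + jp*pF))"
  using assms by (cases pF) (auto simp: even_add even_mult_iff)

lemma sign_S2:
  fixes pF pA pb J jp S ee Q r :: nat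
  assumes "pF < 2" "pA = (pb + (J + jp + S)) mod 2" "r \<le> jp"
  shows "even ((pA*pF + pF*Q + (ee + r*Q + pF*S) + pF*(jp - r)) + (ee + r*(pF + pb + J)))
     \<or> (odd (pF + r) \<and> odd (pb + (Q + J)))"
  using assms by (cases pF) (auto simp: even_add even_mult_iff)

lemma Dbarn_upd: "(\<lambda>s. (sDbar ^^ j s) ((f(p := L)) s)) = (\<lambda>s. (sDbar ^^ j s) (f s))(p := (sDbar ^^ j p) L)"
  by (auto simp: fun_eq_iff)

lemma Dbarn_jupd: "(\<lambda>s. (sDbar ^^ (j(p := v)) s) (f s)) = (\<lambda>s. (sDbar ^^ j s) (f s))(p := (sDbar ^^ v) (f p))"
  by (auto simp: fun_eq_iff)

lemma core:
  fixes n :: nat and lam :: "nat \<Rightarrow> complex" and mu :: complex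
    and a :: "(nat \<Rightarrow> nat) \<Rightarrow> sfun" and pa :: "(nat \<Rightarrow> nat) \<Rightarrow> nat" and pA pF :: nat
    and F :: sfun and q :: "nat \<Rightarrow> nat" and f :: "nat \<Rightarrow> sfun" and j :: "nat \<Rightarrow> nat"
  assumes F: "sm F" "hp F pF" "pF < 2"
    and fs: "\<And>p. p \<in> {1..n} \<Longrightarrow> sm (f p) \<and> hp (f p) (q p)"
    and b: "sm (a j)" "hp (a j) (pa j)"
    and hom: "a j \<noteq> 0 \<Longrightarrow> (pa j + msize n j) mod 2 = pA"
  shows "Lie mu F (Tm n q f j (a j))
     - sscale ((-1)^(pA*pF)) (\<Sum>p\<in>{1..n}. sscale ((-1)^(pF * (\<Sum>s\<in>{1..<p}. q s)))
          (Tm n (q(p := q p + pF)) (f(p := Lie (lam p) F (f p))) j (a j)))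
   = Tm n q f j (Lie (mu - (\<Sum>p\<in>{1..n}. lam p) - of_nat (msize n j) / 2) F (a j))
     - (\<Sum>t\<in>{1..n}. \<Sum>r\<in>{1..j t}. Tm n q f (j(t := j t - r))
          (sscale ((-1) ^ (r * (pF + pa ((j(t := j t - r))(t := (j(t := j t - r)) t + r))
                 + (\<Sum>s\<in>{1..t-1}. (j(t := j t - r)) s))) * bcoef r ((j(t := j t - r)) t) (lam t))
             (smul ((sDbar ^^ r) (sder F)) (a ((j(t := j t - r))(t := (j(t := j t - r)) t + r))))))"
proof -
  define b where "b = a j"
  define pb where "pb = pa j"
  define g where "g = (\<lambda>s. (sDbar ^^ j s) (f s))"
  define E where "E = (-1::complex)^(eps n q j)"
  define \<nu> where "\<nu> = (\<lambda>p. lam p + of_nat (j p) / (2::complex))"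
  define \<alpha> where "\<alpha> = mu - (\<Sum>p\<in>{1..n}. lam p) - of_nat (msize n j) / 2"
  define D where "D = (\<lambda>r. (sDbar ^^ r) (sder F))"
  define M where "M = (\<lambda>p. sprod n (g(p := Lie (\<nu> p) F (g p))))"
  define N' where "N' = (\<lambda>p r. sprod n (\<lambda>s. (sDbar ^^ (j(p := j p - r)) s) (f s)))"
  define W where "W = (\<lambda>p r. smul b (smul (D r) (N' p r)))"
  define s1 where "s1 = (\<lambda>p. (-1::complex)^(pF * (\<Sum>s\<in>{1..<p}. q s + j s)))"
  define s2 where "s2 = (\<lambda>p. (-1::complex)^(pF * (\<Sum>s\<in>{1..<p}. q s)))"
  define E' where "E' = (\<lambda>p. (-1::complex)^(eps n (q(p := q p + pF)) j))"
  define cr where "cr = (\<lambda>p r. (-1::complex)^(pF*(j p - r)) * bcoef r (j p - r) (lam p))"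
  define E'' where "E'' = (\<lambda>p r. (-1::complex)^(eps n q (j(p := j p - r))))"
  define cx where "cx = (\<lambda>p r. (-1::complex)^(r * (pF + pb + (\<Sum>s\<in>{1..<p}. j s))) * bcoef r (j p - r) (lam p))"
  define \<sigma>A where "\<sigma>A = (-1::complex)^(pA*pF)"
  define \<sigma>b where "\<sigma>b = (-1::complex)^(pF*pb)"
  have smg: "sm (g s)" "hp (g s) (q s + j s)" if "s \<in> {1..n}" for s
    using fs[OF that] by (auto simp: g_def sm_Dbarn hp_Dbarn)
  have smN: "sm (sprod n g)" by (rule sm_sprod) (simp add: smg)
  have Tm0: "Tm n q f j X = sscale E (smul X (sprod n g))" for X
    by (simp add: Tm_def E_def g_def)
  have mu_eq: "mu = \<alpha> + (\<Sum>p\<in>{1..n}. \<nu> p)"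
    by (simp add: \<alpha>_def \<nu>_def sum.distrib msize_def sum_divide_distrib[symmetric])
  have A: "Lie mu F (Tm n q f j b) = Tm n q f j (Lie \<alpha> F b)
      + (\<Sum>p\<in>{1..n}. sscale (E * \<sigma>b * s1 p) (smul b (M p)))"
  proof -
    have "Lie mu F (Tm n q f j b) = sscale E (Lie (\<alpha> + (\<Sum>p\<in>{1..n}. \<nu> p)) F (smul b (sprod n g)))"
      unfolding Tm0 mu_eq by (rule Lie_sscale) (simp add: sm_simps smN b(1)[folded b_def])
    also have "\<dots> = sscale E (smul (Lie \<alpha> F b) (sprod n g)
        + sscale \<sigma>b (smul b (Lie (\<Sum>p\<in>{1..n}. \<nu> p) F (sprod n g))))"
      unfolding \<sigma>b_def
      by (subst Lie_smul[OF F(1) _ smN F(2)]) (simp_all add: b_def pb_def b)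
    also have "Lie (\<Sum>p\<in>{1..n}. \<nu> p) F (sprod n g) = (\<Sum>p\<in>{1..n}. sscale (s1 p) (M p))"
      unfolding s1_def M_def
      by (rule Lie_sprod[OF F(1) F(2)]) (simp add: smg)
    finally show ?thesis
      by (simp add: Tm0 sscale_add sscale_sum smul_sum smul_sscale mult.assoc)
  qed
  have B: "Tm n (q(p := q p + pF)) (f(p := Lie (lam p) F (f p))) j b =
      sscale (E' p * (-1)^(j p * pF)) (smul b (M p)) + (\<Sum>r\<in>{1..j p}. sscale (E' p * cr p r) (W p r))"
    if p: "p \<in> {1..n}" for p
  proof -
    have fp: "sm (f p)" using fs[OF p] by simp
    have e1: "(sDbar ^^ j p) (Lie (lam p) F (f p)) = sscale ((-1)^(j p * pF)) (Lie (\<nu> p) F (g p))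
       + (\<Sum>r\<in>{1..j p}. sscale (cr p r) (smul (D r) ((sDbar ^^ (j p - r)) (f p))))"
      unfolding \<nu>_def g_def cr_def D_def by (rule Dbar_Lie_pow[OF F(1) F(2) fp])
    have e2: "g(p := (sDbar ^^ (j p - r)) (f p)) = (\<lambda>s. (sDbar ^^ (j(p := j p - r)) s) (f s))" for r
      unfolding g_def by (rule Dbarn_jupd[symmetric])
    have "Tm n (q(p := q p + pF)) (f(p := Lie (lam p) F (f p))) j b =
        sscale (E' p) (smul b (sprod n (g(p := (sDbar ^^ j p) (Lie (lam p) F (f p))))))"
      unfolding Tm_def E'_def g_def Dbarn_upd ..
    also have "\<dots> = sscale (E' p) (smul b (sscale ((-1)^(j p * pF)) (M p)
        + (\<Sum>r\<in>{1..j p}. sscale (cr p r) (smul (D r) (N' p r)))))"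
      unfolding e1 M_def N'_def
      by (simp only: sprod_upd_add[OF p] sprod_upd_sscale[OF p] sprod_upd_sum[OF p] sprod_upd_smul[OF p] e2)
    also have "\<dots> = sscale (E' p * (-1)^(j p * pF)) (smul b (M p)) + (\<Sum>r\<in>{1..j p}. sscale (E' p * cr p r) (W p r))"
      by (simp add: W_def smul_add smul_sum smul_sscale sscale_add sscale_sum)
    finally show ?thesis .
  qed
  have Dst: "Tm n q f (j(t := j t - r))
          (sscale ((-1) ^ (r * (pF + pa ((j(t := j t - r))(t := (j(t := j t - r)) t + r))
                 + (\<Sum>s\<in>{1..t-1}. (j(t := j t - r)) s))) * bcoef r ((j(t := j t - r)) t) (lam t))
             (smul ((sDbar ^^ r) (sder F)) (a ((j(t := j t - r))(t := (j(t := j t - r)) t + r)))))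
      = sscale (E'' t r * cx t r) (W t r)"
    if t: "t \<in> {1..n}" and r: "r \<in> {1..j t}" for t r
  proof -
    have jj: "(j(t := j t - r))(t := (j(t := j t - r)) t + r) = j" using r by auto
    have ss: "(\<Sum>s\<in>{1..t-1}. (j(t := j t - r)) s) = (\<Sum>s\<in>{1..<t}. j s)"
    proof -
      have "{1..t-1} = {1..<t}" using t by auto
      then show ?thesis by (auto intro!: sum.cong)
    qed
    show ?thesis
      unfolding jj ss
      by (simp add: Tm_def E''_def cx_def W_def N'_def D_def b_def pb_def smul_sscale
          smul_assoc smul_comm[of "(sDbar ^^ r) (sder F)" "a j"] mult.commute)
  qed
  have sumqj: "(\<Sum>s\<in>{1..<p}. q s + j s) = (\<Sum>s\<in>{1..<p}. q s) + (\<Sum>s\<in>{1..<p}. j s)" for p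
    by (rule sum.distrib)
  have S1: "sscale (\<sigma>A * s2 p * (E' p * (-1)^(j p * pF))) (smul b (M p)) = sscale (E * \<sigma>b * s1 p) (smul b (M p))"
    if p: "p \<in> {1..n}" for p
  proof (cases "b = 0")
    case True then show ?thesis by simp
  next
    case False
    then have pA: "pA = (pb + ((\<Sum>s\<in>{1..<p}. j s) + j p + (\<Sum>s\<in>{p+1..n}. j s))) mod 2"
      using hom msize_split[OF p, of j] by (simp add: b_def pb_def)
    have "\<sigma>A * s2 p * (E' p * (-1)^(j p * pF)) = (-1)^(pA*pF + pF*(\<Sum>s\<in>{1..<p}. q s) + (eps n q j + pF * (\<Sum>s\<in>{p+1..n}. j s)) + j p * pF)"
      by (simp add: \<sigma>A_def s2_def E'_def eps_q_upd[OF p] power_add)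
    also have "\<dots> = (-1)^(eps n q j + pF*pb + pF*((\<Sum>s\<in>{1..<p}. q s) + (\<Sum>s\<in>{1..<p}. j s)))"
      by (rule neg1_pow_eq) (use sign_S1[OF F(3) pA, where ee="eps n q j" and Q="\<Sum>s\<in>{1..<p}. q s"] in \<open>simp add: ac_simps\<close>)
    also have "\<dots> = E * \<sigma>b * s1 p"
      by (simp add: E_def \<sigma>b_def s1_def sum.distrib power_add)
    finally show ?thesis by simp
  qed
  have S2: "sscale (\<sigma>A * s2 p * (E' p * cr p r)) (W p r) = sscale (E'' p r * cx p r) (W p r)"
    if p: "p \<in> {1..n}" and r: "r \<in> {1..j p}" for p r
  proof (cases "b = 0")
    case True then show ?thesis by (simp add: W_def)
  next
    case False
    then have pA: "pA = (pb + ((\<Sum>s\<in>{1..<p}. j s) + j p + (\<Sum>s\<in>{p+1..n}. j s))) mod 2"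
      using hom msize_split[OF p, of j] by (simp add: b_def pb_def)
    have rj: "r \<le> j p" using r by simp
    define e1 where "e1 = pA*pF + pF*(\<Sum>s\<in>{1..<p}. q s) + (eps n q (j(p := j p - r)) + r*(\<Sum>s\<in>{1..<p}. q s) + pF * (\<Sum>s\<in>{p+1..n}. j s)) + pF*(j p - r)"
    define e2 where "e2 = eps n q (j(p := j p - r)) + r * (pF + pb + (\<Sum>s\<in>{1..<p}. j s))"
    have ej: "eps n q j = eps n q (j(p := j p - r)) + r * (\<Sum>s\<in>{1..<p}. q s)"
      using p rj by (rule eps_j_upd)
    have l: "\<sigma>A * s2 p * (E' p * cr p r) = (-1)^e1 * bcoef r (j p - r) (lam p)"
      unfolding e1_def \<sigma>A_def s2_def E'_def cr_def eps_q_upd[OF p] ej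
      by (simp add: power_add)
    have rr: "E'' p r * cx p r = (-1)^e2 * bcoef r (j p - r) (lam p)"
      unfolding e2_def by (simp add: E''_def cx_def power_add)
    have "even (e1 + e2) \<or> (odd (pF + r) \<and> odd (pb + ((\<Sum>s\<in>{1..<p}. q s) + (\<Sum>s\<in>{1..<p}. j s))))"
      using sign_S2[OF F(3) pA rj, where ee="eps n q (j(p := j p - r))" and Q="\<Sum>s\<in>{1..<p}. q s"]
      unfolding e1_def e2_def .
    then show ?thesis
    proof
      assume ev: "even (e1 + e2)"
      show ?thesis unfolding l rr neg1_pow_eq[OF ev] ..
    next
      assume odd: "odd (pF + r) \<and> odd (pb + ((\<Sum>s\<in>{1..<p}. q s) + (\<Sum>s\<in>{1..<p}. j s)))"
      define g2 where "g2 = (\<lambda>s. (sDbar ^^ (j(p := j p - r)) s) (f s))"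
      have split: "N' p r = smul (prodL [1..<p] g2) (smul (g2 p) (prodL [Suc p..<n+1] g2))"
        unfolding N'_def g2_def[symmetric] by (rule sprod_split[OF p])
      have hpP: "hp (prodL [1..<p] g2) (\<Sum>s\<in>{1..<p}. q s + j s)"
      proof (rule hp_prefix)
        fix x assume x: "x \<in> {1..<p}"
        then have "x \<in> {1..n}" "x \<noteq> p" using p by auto
        then show "hp (g2 x) (q x + j x)" using fs[of x] by (simp add: g2_def hp_Dbarn)
      qed
      have hpbP: "hp (smul b (prodL [1..<p] g2)) (pb + (\<Sum>s\<in>{1..<p}. q s + j s))"
        by (rule hp_smul[OF _ hpP]) (simp add: b_def pb_def b)
      have hpD: "hp (D r) (pF + r)" unfolding D_def by (rule hp_Dbarn) (simp add: hp_simps F)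
      have z: "smul (D r) (smul b (prodL [1..<p] g2)) = 0"
        by (rule hp_odd_zero[OF hpD hpbP]) (use odd in \<open>simp_all add: sum.distrib\<close>)
      have "W p r = smul (smul (D r) (smul b (prodL [1..<p] g2))) (smul (g2 p) (prodL [Suc p..<n+1] g2))"
        unfolding W_def split by (simp add: smul_def algebra_simps)
      then have "W p r = 0" by (simp only: z smul_zero)
      then show ?thesis by simp
    qed
  qed
  have C: "sscale \<sigma>A (\<Sum>p\<in>{1..n}. sscale (s2 p) (Tm n (q(p := q p + pF)) (f(p := Lie (lam p) F (f p))) j b))
     = (\<Sum>p\<in>{1..n}. sscale (E * \<sigma>b * s1 p) (smul b (M p)))
       + (\<Sum>p\<in>{1..n}. \<Sum>r\<in>{1..j p}. sscale (E'' p r * cx p r) (W p r))"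
  proof -
    have "sscale \<sigma>A (\<Sum>p\<in>{1..n}. sscale (s2 p) (Tm n (q(p := q p + pF)) (f(p := Lie (lam p) F (f p))) j b))
      = (\<Sum>p\<in>{1..n}. sscale (\<sigma>A * s2 p * (E' p * (-1)^(j p * pF))) (smul b (M p))
          + (\<Sum>r\<in>{1..j p}. sscale (\<sigma>A * s2 p * (E' p * cr p r)) (W p r)))"
      unfolding sscale_sum
      by (rule sum.cong[OF refl]) (simp add: B sscale_add sscale_sum mult.assoc)
    also have "\<dots> = (\<Sum>p\<in>{1..n}. sscale (E * \<sigma>b * s1 p) (smul b (M p))
          + (\<Sum>r\<in>{1..j p}. sscale (E'' p r * cx p r) (W p r)))"
    proof (rule sum.cong[OF refl], goal_cases)
      case (1 p)
      then have p: "p \<in> {1..n}" by simp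
      have "(\<Sum>r\<in>{1..j p}. sscale (\<sigma>A * s2 p * (E' p * cr p r)) (W p r)) =
            (\<Sum>r\<in>{1..j p}. sscale (E'' p r * cx p r) (W p r))"
        by (rule sum.cong[OF refl], erule S2[OF p])
      then show ?case using S1[OF p] by simp
    qed
    finally show ?thesis by (simp add: sum.distrib)
  qed
  have rhs: "(\<Sum>t\<in>{1..n}. \<Sum>r\<in>{1..j t}. Tm n q f (j(t := j t - r))
          (sscale ((-1) ^ (r * (pF + pa ((j(t := j t - r))(t := (j(t := j t - r)) t + r))
                 + (\<Sum>s\<in>{1..t-1}. (j(t := j t - r)) s))) * bcoef r ((j(t := j t - r)) t) (lam t))
             (smul ((sDbar ^^ r) (sder F)) (a ((j(t := j t - r))(t := (j(t := j t - r)) t + r))))))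
     = (\<Sum>p\<in>{1..n}. \<Sum>r\<in>{1..j p}. sscale (E'' p r * cx p r) (W p r))"
    by (rule sum.cong[OF refl], rule sum.cong[OF refl], rule Dst) auto
  have lhs: "Lie mu F (Tm n q f j b)
     - sscale \<sigma>A (\<Sum>p\<in>{1..n}. sscale (s2 p) (Tm n (q(p := q p + pF)) (f(p := Lie (lam p) F (f p))) j b))
     = Tm n q f j (Lie \<alpha> F b) - (\<Sum>p\<in>{1..n}. \<Sum>r\<in>{1..j p}. sscale (E'' p r * cx p r) (W p r))"
    unfolding A C by simp
  show ?thesis
    unfolding rhs using lhs by (simp only: b_def \<sigma>A_def s2_def \<alpha>_def)
qed

lemma has_parity_hp: "has_parity G p \<Longrightarrow> hp G p \<and> p < 2"
  by (auto simp: hp_def has_parity_def)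

lemma coefX_eq:
  assumes n: "1 \<le> n"
  shows "coefX n K lam mu a pa F pF i =
    Lie (mu - (\<Sum>p\<in>{1..n}. lam p) - of_nat (msize n i) / 2) F (a i)
    - (\<Sum>t\<in>{1..n}. \<Sum>r\<in>{1..K - msize n i}.
        sscale ((-1) ^ (r * (pF + pa (i(t := i t + r)) + (\<Sum>s\<in>{1..t-1}. i s))) * bcoef r (i t) (lam t))
          (smul ((sDbar ^^ r) (sder F)) (a (i(t := i t + r)))))"
proof -
  have "{1..n} = insert 1 {2..n}" using n by auto
  then have e: "(\<Sum>t\<in>{1..n}. G t) = G 1 + (\<Sum>t\<in>{2..n}. G t)" for G :: "nat \<Rightarrow> sfun"
    by simp
  show ?thesis unfolding coefX_def Let_def e by (simp add: algebra_simps)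
qed

theorem proposition2p1:
  fixes n K :: nat and lam :: "nat \<Rightarrow> complex" and mu :: complex
    and a :: "(nat \<Rightarrow> nat) \<Rightarrow> sfun" and pa :: "(nat \<Rightarrow> nat) \<Rightarrow> nat" and pA :: nat
    and F :: sfun and pF :: nat
  assumes n_pos: "1 \<le> n"
    and a_smooth: "\<And>l i. l \<le> K \<Longrightarrow> i \<in> idx n l \<Longrightarrow> smooth_sf (a i)"
    and a_par: "\<And>l i. l \<le> K \<Longrightarrow> i \<in> idx n l \<Longrightarrow> has_parity (a i) (pa i)"
    and A_par: "pA < 2"
    and A_hom: "\<And>l i. l \<le> K \<Longrightarrow> i \<in> idx n l \<Longrightarrow> a i \<noteq> 0 \<Longrightarrow> (pa i + l) mod 2 = pA"
    and F_smooth: "smooth_sf F"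
    and F_par: "has_parity F pF"
  shows "\<forall>(f :: nat \<Rightarrow> sfun) (q :: nat \<Rightarrow> nat).
           (\<forall>p\<in>{1..n}. smooth_sf (f p) \<and> has_parity (f p) (q p)) \<longrightarrow>
           opLie n K lam mu a pA F pF q f = opapp n K (coefX n K lam mu a pa F pF) q f"
proof (intro allI impI)
  fix f :: "nat \<Rightarrow> sfun" and q :: "nat \<Rightarrow> nat"
  assume hf: "\<forall>p\<in>{1..n}. smooth_sf (f p) \<and> has_parity (f p) (q p)"
  have F: "sm F" "hp F pF" "pF < 2" using F_smooth F_par has_parity_hp by (auto simp: smooth_sm)
  have fs: "sm (f p) \<and> hp (f p) (q p)" if "p \<in> {1..n}" for p
    using hf that has_parity_hp by (auto simp: smooth_sm)
  have jidx: "j \<in> idx n (msize n j)" "msize n j \<le> K" if "j \<in> Iset n K" for j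
    using that by (auto simp: idx_def Iset_def msize_def)
  have aj: "sm (a j)" "hp (a j) (pa j)" "a j \<noteq> 0 \<Longrightarrow> (pa j + msize n j) mod 2 = pA" if "j \<in> Iset n K" for j
    using a_smooth[OF jidx(2)[OF that] jidx(1)[OF that]] a_par[OF jidx(2)[OF that] jidx(1)[OF that]]
      A_hom[OF jidx(2)[OF that] jidx(1)[OF that]] has_parity_hp by (auto simp: smooth_sm)
  have smT: "sm (Tm n q f j (a j))" if "j \<in> Iset n K" for j
    unfolding Tm_def using aj[OF that] fs
    by (intro sm_sscale sm_smul sm_sprod) (auto simp: sm_Dbarn)
  define XX where "XX = (\<lambda>t r i. sscale ((-1) ^ (r * (pF + pa (i(t := i t + r)) + (\<Sum>s\<in>{1..t-1}. i s))) * bcoef r (i t) (lam t))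
          (smul ((sDbar ^^ r) (sder F)) (a (i(t := i t + r)))))"
  define \<alpha> where "\<alpha> = (\<lambda>i. mu - (\<Sum>p\<in>{1..n}. lam p) - of_nat (msize n i) / (2::complex))"
  have "opLie n K lam mu a pA F pF q f =
      (\<Sum>j\<in>Iset n K. Lie mu F (Tm n q f j (a j)))
      - sscale ((-1)^(pA*pF)) (\<Sum>j\<in>Iset n K. \<Sum>p\<in>{1..n}. sscale ((-1)^(pF * (\<Sum>s\<in>{1..<p}. q s)))
          (Tm n (q(p := q p + pF)) (f(p := Lie (lam p) F (f p))) j (a j)))"
  proof -
    have s1: "Lie mu F (\<Sum>j\<in>Iset n K. Tm n q f j (a j)) = (\<Sum>j\<in>Iset n K. Lie mu F (Tm n q f j (a j)))"
      by (rule Lie_sum) (rule smT)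
    have s2: "(\<Sum>p\<in>{1..n}. sscale ((-1)^(pF * (\<Sum>s\<in>{1..<p}. q s))) (\<Sum>j\<in>Iset n K. Tm n (q(p := q p + pF)) (f(p := Lie (lam p) F (f p))) j (a j)))
      = (\<Sum>j\<in>Iset n K. \<Sum>p\<in>{1..n}. sscale ((-1)^(pF * (\<Sum>s\<in>{1..<p}. q s))) (Tm n (q(p := q p + pF)) (f(p := Lie (lam p) F (f p))) j (a j)))"
      by (simp only: sscale_sum) (rule sum.swap)
    show ?thesis unfolding opLie_def opapp_Tm s1 s2 ..
  qed
  also have "\<dots> = (\<Sum>j\<in>Iset n K. Lie mu F (Tm n q f j (a j))
      - sscale ((-1)^(pA*pF)) (\<Sum>p\<in>{1..n}. sscale ((-1)^(pF * (\<Sum>s\<in>{1..<p}. q s)))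
          (Tm n (q(p := q p + pF)) (f(p := Lie (lam p) F (f p))) j (a j))))"
    by (simp add: sscale_sum sum_subtractf)
  also have "\<dots> = (\<Sum>j\<in>Iset n K. Tm n q f j (Lie (\<alpha> j) F (a j))
      - (\<Sum>t\<in>{1..n}. \<Sum>r\<in>{1..j t}. Tm n q f (j(t := j t - r)) (XX t r (j(t := j t - r)))))"
    unfolding XX_def \<alpha>_def
  proof (rule sum.cong[OF refl], goal_cases)
    case (1 j)
    then have j: "j \<in> Iset n K" by simp
    show ?case by (rule core[where a=a and j=j and n=n and q=q and f=f and F=F and pa=pa and pF=pF
        and pA=pA and lam=lam and mu=mu, OF F fs aj(1)[OF j] aj(2)[OF j] aj(3)[OF j]])
  qed
  also have "\<dots> = (\<Sum>j\<in>Iset n K. Tm n q f j (Lie (\<alpha> j) F (a j)))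
      - (\<Sum>t\<in>{1..n}. \<Sum>j\<in>Iset n K. \<Sum>r\<in>{1..j t}. Tm n q f (j(t := j t - r)) (XX t r (j(t := j t - r))))"
    by (simp only: sum_subtractf sum.swap[of _ "Iset n K"])
  also have "(\<Sum>t\<in>{1..n}. \<Sum>j\<in>Iset n K. \<Sum>r\<in>{1..j t}. Tm n q f (j(t := j t - r)) (XX t r (j(t := j t - r))))
      = (\<Sum>t\<in>{1..n}. \<Sum>i\<in>Iset n K. \<Sum>r\<in>{1..K - msize n i}. Tm n q f i (XX t r i))"
    by (rule sum.cong[OF refl], rule reindex[symmetric]) 
  also have "(\<Sum>j\<in>Iset n K. Tm n q f j (Lie (\<alpha> j) F (a j))) -
      (\<Sum>t\<in>{1..n}. \<Sum>i\<in>Iset n K. \<Sum>r\<in>{1..K - msize n i}. Tm n q f i (XX t r i))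
      = (\<Sum>i\<in>Iset n K. Tm n q f i (coefX n K lam mu a pa F pF i))"
  proof -
    have "(\<Sum>i\<in>Iset n K. Tm n q f i (coefX n K lam mu a pa F pF i)) =
      (\<Sum>i\<in>Iset n K. Tm n q f i (Lie (\<alpha> i) F (a i)) - (\<Sum>t\<in>{1..n}. \<Sum>r\<in>{1..K - msize n i}. Tm n q f i (XX t r i)))"
      unfolding coefX_eq[OF n_pos] XX_def \<alpha>_def by (simp only: Tm_lin)
    also have "\<dots> = (\<Sum>i\<in>Iset n K. Tm n q f i (Lie (\<alpha> i) F (a i)))
       - (\<Sum>i\<in>Iset n K. \<Sum>t\<in>{1..n}. \<Sum>r\<in>{1..K - msize n i}. Tm n q f i (XX t r i))"
      by (rule sum_subtractf)
    also have "(\<Sum>i\<in>Iset n K. \<Sum>t\<in>{1..n}. \<Sum>r\<in>{1..K - msize n i}. Tm n q f i (XX t r i))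
       = (\<Sum>t\<in>{1..n}. \<Sum>i\<in>Iset n K. \<Sum>r\<in>{1..K - msize n i}. Tm n q f i (XX t r i))"
      by (rule sum.swap)
    finally show ?thesis by simp
  qed
  finally show "opLie n K lam mu a pA F pF q f = opapp n K (coefX n K lam mu a pa F pF) q f"
    by (simp add: opapp_Tm)
qed

end
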